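(* Let $1\le p<\infty$ and let $d_{w,p}$ be a Lorentz sequence space. Then every strictly singular operator from $d_{w,p}$ to $\ell_p$ is compact, i.e. $\mathcal{SS}(d_{w,p},\ell_p)=\mathcal K(d_{w,p},\ell_p)$.
   Context: Let $1\le p<\infty$ and let $w=(w_n)$ be a real sequence with $w_1=1$, $w_n\downarrow 0$ and $\sum_n w_n=\infty$. The Lorentz sequence space $d_{w,p}$ is the Banach space of all $x=(x_n)\in c_0$ with $\|x\|_{d_{w,p}}=\big(\sum_{n}w_n (x^*_n)^p\big)^{1/p}<\infty$, where $(x^*_n)$ is the non-increasing rearrangement of $(|x_n|)$. An operator is strictly singular if its restriction to no infinite-dimensional closed subspace is an isomorphism. *)

theory Defs
  imports "HOL-Analysis.Analysis"
begin

text \<open>Sequences are real-valued functions on nat (index 0 plays the role of index 1).\<close>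

text \<open>Non-increasing rearrangement of |x| (distribution-function definition):
  x*_n = inf { s >= 0 : #{k. |x_k| > s} <= n }.\<close>
definition rearr :: "(nat \<Rightarrow> real) \<Rightarrow> nat \<Rightarrow> real" where
  "rearr x n = Inf {s. 0 \<le> s \<and> finite {k. s < \<bar>x k\<bar>} \<and> card {k. s < \<bar>x k\<bar>} \<le> n}"

definition lorentz_space :: "(nat \<Rightarrow> real) \<Rightarrow> real \<Rightarrow> (nat \<Rightarrow> real) set" where
  "lorentz_space w p = {x. x \<longlonglongrightarrow> 0 \<and> summable (\<lambda>n. w n * (rearr x n) powr p)}"

definition lorentz_norm :: "(nat \<Rightarrow> real) \<Rightarrow> real \<Rightarrow> (nat \<Rightarrow> real) \<Rightarrow> real" where
  "lorentz_norm w p x = (\<Sum>n. w n * (rearr x n) powr p) powr (1 / p)"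

definition ell_space :: "real \<Rightarrow> (nat \<Rightarrow> real) set" where
  "ell_space p = {x. summable (\<lambda>n. \<bar>x n\<bar> powr p)}"

definition ell_norm :: "real \<Rightarrow> (nat \<Rightarrow> real) \<Rightarrow> real" where
  "ell_norm p x = (\<Sum>n. \<bar>x n\<bar> powr p) powr (1 / p)"

definition seq_diff :: "(nat \<Rightarrow> real) \<Rightarrow> (nat \<Rightarrow> real) \<Rightarrow> nat \<Rightarrow> real" where
  "seq_diff x y = (\<lambda>k. x k - y k)"

definition bounded_linear_op ::
  "(nat \<Rightarrow> real) set \<Rightarrow> ((nat \<Rightarrow> real) \<Rightarrow> real) \<Rightarrow> (nat \<Rightarrow> real) set \<Rightarrow> ((nat \<Rightarrow> real) \<Rightarrow> real)
   \<Rightarrow> ((nat \<Rightarrow> real) \<Rightarrow> (nat \<Rightarrow> real)) \<Rightarrow> bool" where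
  "bounded_linear_op X nX Y nY T \<longleftrightarrow>
     (\<forall>x\<in>X. T x \<in> Y) \<and>
     (\<forall>x\<in>X. \<forall>y\<in>X. T (\<lambda>k. x k + y k) = (\<lambda>k. T x k + T y k)) \<and>
     (\<forall>x\<in>X. \<forall>c::real. T (\<lambda>k. c * x k) = (\<lambda>k. c * T x k)) \<and>
     (\<exists>C. \<forall>x\<in>X. nY (T x) \<le> C * nX x)"

definition fspan :: "(nat \<Rightarrow> real) set \<Rightarrow> (nat \<Rightarrow> real) set" where
  "fspan F = {v. \<exists>c. v = (\<lambda>k. \<Sum>f\<in>F. c f * f k)}"

definition infinite_dimensional :: "(nat \<Rightarrow> real) set \<Rightarrow> bool" where
  "infinite_dimensional M \<longleftrightarrow> (\<forall>F. finite F \<longrightarrow> \<not> M \<subseteq> fspan F)"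

definition linear_subspace_of :: "(nat \<Rightarrow> real) set \<Rightarrow> (nat \<Rightarrow> real) set \<Rightarrow> bool" where
  "linear_subspace_of M X \<longleftrightarrow> M \<subseteq> X \<and> (\<lambda>k. 0) \<in> M \<and>
     (\<forall>x\<in>M. \<forall>y\<in>M. (\<lambda>k. x k + y k) \<in> M) \<and> (\<forall>x\<in>M. \<forall>c::real. (\<lambda>k. c * x k) \<in> M)"

definition norm_closed_in :: "(nat \<Rightarrow> real) set \<Rightarrow> (nat \<Rightarrow> real) set \<Rightarrow> ((nat \<Rightarrow> real) \<Rightarrow> real) \<Rightarrow> bool" where
  "norm_closed_in M X nX \<longleftrightarrow>
     (\<forall>(u::nat\<Rightarrow>nat\<Rightarrow>real) x. (\<forall>j. u j \<in> M) \<longrightarrow> x \<in> X \<longrightarrow> (\<lambda>j. nX (seq_diff (u j) x)) \<longlonglongrightarrow> 0 \<longrightarrow> x \<in> M)"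

definition strictly_singular ::
  "(nat \<Rightarrow> real) set \<Rightarrow> ((nat \<Rightarrow> real) \<Rightarrow> real) \<Rightarrow> ((nat \<Rightarrow> real) \<Rightarrow> real)
   \<Rightarrow> ((nat \<Rightarrow> real) \<Rightarrow> (nat \<Rightarrow> real)) \<Rightarrow> bool" where
  "strictly_singular X nX nY T \<longleftrightarrow>
     \<not> (\<exists>M. linear_subspace_of M X \<and> norm_closed_in M X nX \<and> infinite_dimensional M \<and>
            (\<exists>c>0. \<forall>x\<in>M. c * nX x \<le> nY (T x)))"

definition compact_op ::
  "(nat \<Rightarrow> real) set \<Rightarrow> ((nat \<Rightarrow> real) \<Rightarrow> real) \<Rightarrow> (nat \<Rightarrow> real) set \<Rightarrow> ((nat \<Rightarrow> real) \<Rightarrow> real)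
   \<Rightarrow> ((nat \<Rightarrow> real) \<Rightarrow> (nat \<Rightarrow> real)) \<Rightarrow> bool" where
  "compact_op X nX Y nY T \<longleftrightarrow>
     (\<forall>(u::nat\<Rightarrow>nat\<Rightarrow>real) bd. (\<forall>j. u j \<in> X \<and> nX (u j) \<le> bd) \<longrightarrow>
        (\<exists>(r::nat\<Rightarrow>nat) y. strict_mono r \<and> y \<in> Y \<and> (\<lambda>j. nY (seq_diff (T (u (r j))) y)) \<longlonglongrightarrow> 0))"

end

theory Submission
  imports Defs "HOL-Library.Function_Algebras"
begin


definition greedy :: "(nat \<Rightarrow> real) \<Rightarrow> (nat \<Rightarrow> nat) \<Rightarrow> bool" where
  "greedy g e \<longleftrightarrow> (\<forall>i. e i \<notin> e ` {..<i} \<and> (\<forall>j. j \<notin> e ` {..<i} \<longrightarrow> g j \<le> g (e i)))"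

lemma gmax_ex:
  fixes g :: "nat \<Rightarrow> real"
  assumes "g \<longlonglongrightarrow> 0" "\<And>k. g k \<ge> 0" "finite F"
  shows "\<exists>k. k \<notin> F \<and> (\<forall>j. j \<notin> F \<longrightarrow> g j \<le> g k)"
proof (cases "\<forall>j. j \<notin> F \<longrightarrow> g j = 0")
  case True
  obtain k where "k \<notin> F" using assms(3) ex_new_if_finite infinite_UNIV_nat by blast
  then show ?thesis using True assms(2) by (metis order.refl)
next
  case False
  then obtain j0 where j0: "j0 \<notin> F" "g j0 > 0" using assms(2) by (metis order.not_eq_order_implies_strict)
  have "eventually (\<lambda>k. g k < g j0) sequentially"
    using assms(1) j0(2) by (simp add: order_tendsto_iff)
  then obtain N where N: "\<And>k. k \<ge> N \<Longrightarrow> g k < g j0" by (auto simp: eventually_sequentially)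
  define B where "B = {k. k \<notin> F \<and> g j0 \<le> g k}"
  have "B \<subseteq> {..<N}" using N by (auto simp: B_def) (meson leD not_le_imp_less)
  then have fB: "finite B" by (rule finite_subset) simp
  have "j0 \<in> B" using j0 by (simp add: B_def)
  define m where "m = Max (g ` B)"
  have "m \<in> g ` B" using fB \<open>j0 \<in> B\<close> unfolding m_def by (intro Max_in) auto
  then obtain k where k1: "k \<in> B" "g k = m" by auto
  have k2: "\<And>j. j \<in> B \<Longrightarrow> g j \<le> g k" using fB k1 unfolding m_def by simp
  note k = k1(1) k2
  show ?thesis
  proof (intro exI conjI allI impI)
    show "k \<notin> F" using k by (simp add: B_def)
    fix j assume "j \<notin> F"
    show "g j \<le> g k"
    proof (cases "g j0 \<le> g j")
      case True then show ?thesis using k \<open>j \<notin> F\<close> by (simp add: B_def)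
    next
      case False then show ?thesis using k(1) by (simp add: B_def)
    qed
  qed
qed

definition gmax :: "(nat \<Rightarrow> real) \<Rightarrow> nat set \<Rightarrow> nat" where
  "gmax g F = (SOME k. k \<notin> F \<and> (\<forall>j. j \<notin> F \<longrightarrow> g j \<le> g k))"

primrec glist :: "(nat \<Rightarrow> real) \<Rightarrow> nat \<Rightarrow> nat list" where
  "glist g 0 = []"
| "glist g (Suc n) = glist g n @ [gmax g (set (glist g n))]"

definition genum :: "(nat \<Rightarrow> real) \<Rightarrow> nat \<Rightarrow> nat" where
  "genum g i = gmax g (set (glist g i))"

lemma set_glist: "set (glist g n) = genum g ` {..<n}"
  by (induction n) (auto simp: genum_def lessThan_Suc)

lemma greedy_ex:
  fixes g :: "nat \<Rightarrow> real"
  assumes "g \<longlonglongrightarrow> 0" "\<And>k. g k \<ge> 0"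
  shows "greedy g (genum g)"
  unfolding greedy_def
proof
  fix i
  have "\<exists>k. k \<notin> set (glist g i) \<and> (\<forall>j. j \<notin> set (glist g i) \<longrightarrow> g j \<le> g k)"
    by (rule gmax_ex[OF assms]) simp
  then have "genum g i \<notin> set (glist g i) \<and> (\<forall>j. j \<notin> set (glist g i) \<longrightarrow> g j \<le> g (genum g i))"
    unfolding genum_def gmax_def by (rule someI_ex)
  then show "genum g i \<notin> genum g ` {..<i} \<and> (\<forall>j. j \<notin> genum g ` {..<i} \<longrightarrow> g j \<le> g (genum g i))"
    by (simp add: set_glist)
qed

lemma greedy_inj: "greedy g e \<Longrightarrow> inj e"
proof (rule injI, rule ccontr)
  fix a b assume G: "greedy g e" and eq: "e a = e b" and ne: "a \<noteq> b"
  show False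
  proof (cases "a < b")
    case True then show False using G eq unfolding greedy_def by (metis image_eqI lessThan_iff)
  next
    case False then have "b < a" using ne by simp
    then show False using G eq unfolding greedy_def by (metis image_eqI lessThan_iff)
  qed
qed

lemma greedy_le: "greedy g e \<Longrightarrow> j \<le> i \<Longrightarrow> g (e i) \<le> g (e j)"
proof -
  assume G: "greedy g e" and ji: "j \<le> i"
  show ?thesis
  proof (cases "j = i")
    case True then show ?thesis by simp
  next
    case False
    have "e i \<notin> e ` {..<j}"
    proof
      assume "e i \<in> e ` {..<j}"
      then have "e i \<in> e ` {..<i}" using ji by auto
      then show False using G unfolding greedy_def by blast
    qed
    then show ?thesis using G unfolding greedy_def by blast
  qed
qed

lemma greedy_out: "greedy g e \<Longrightarrow> k \<notin> e ` {..<n} \<Longrightarrow> j < n \<Longrightarrow> g k \<le> g (e j)"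
proof -
  assume G: "greedy g e" and k: "k \<notin> e ` {..<n}" and j: "j < n"
  have "k \<notin> e ` {..<j}" using k j by auto
  then show ?thesis using G unfolding greedy_def by blast
qed

lemma rearr_le:
  assumes "0 \<le> s" "\<And>k. \<bar>y k\<bar> \<le> s"
  shows "rearr y n \<le> s"
proof -
  have "{k. s < \<bar>y k\<bar>} = {}" using assms(2) by (auto simp: not_less[symmetric])
  then have "s \<in> {s. 0 \<le> s \<and> finite {k. s < \<bar>y k\<bar>} \<and> card {k. s < \<bar>y k\<bar>} \<le> n}"
    using assms(1) by simp
  then show ?thesis unfolding rearr_def by (rule cInf_lower) (auto intro: bdd_belowI[of _ 0])
qed

lemma rearr_greedy:
  assumes G: "greedy (\<lambda>k. \<bar>x k\<bar>) e"
  shows "rearr x i = \<bar>x (e i)\<bar>"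
proof -
  let ?S = "{s. 0 \<le> s \<and> finite {k. s < \<bar>x k\<bar>} \<and> card {k. s < \<bar>x k\<bar>} \<le> i}"
  let ?v = "\<bar>x (e i)\<bar>"
  have sub: "{k. ?v < \<bar>x k\<bar>} \<subseteq> e ` {..<i}"
    using G unfolding greedy_def by (smt (verit) mem_Collect_eq subsetI)
  have "card {k. ?v < \<bar>x k\<bar>} \<le> card (e ` {..<i})"
    by (rule card_mono[OF _ sub]) simp
  also have "\<dots> \<le> i" using card_image_le[of "{..<i}" e] by simp
  finally have vS: "?v \<in> ?S" using finite_subset[OF sub] by simp
  have low: "?v \<le> s" if "s \<in> ?S" for s
  proof (rule ccontr)
    assume "\<not> ?v \<le> s"
    then have sv: "s < ?v" by simp
    have "e ` {..i} \<subseteq> {k. s < \<bar>x k\<bar>}"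
      using greedy_le[OF G] sv by (smt (verit) atMost_iff image_subset_iff mem_Collect_eq)
    moreover have "finite {k. s < \<bar>x k\<bar>}" "card {k. s < \<bar>x k\<bar>} \<le> i" using that by auto
    ultimately have "card (e ` {..i}) \<le> i" by (meson card_mono le_trans)
    moreover have "card (e ` {..i}) = Suc i"
      using greedy_inj[OF G] by (simp add: card_image inj_on_subset)
    ultimately show False by simp
  qed
  show ?thesis unfolding rearr_def
    by (rule cInf_eq_minimum[OF vS low]) 
qed


definition rho :: "(nat \<Rightarrow> real) \<Rightarrow> real \<Rightarrow> (nat \<Rightarrow> real) \<Rightarrow> real" where
  "rho w p x = (\<Sum>n. w n * rearr x n powr p)"

definition Fk :: "real \<Rightarrow> (nat \<Rightarrow> real) \<Rightarrow> nat \<Rightarrow> real" where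
  "Fk p x n = (\<Sum>i<n. rearr x i powr p)"

lemma greedy_exists:
  assumes "x \<longlonglongrightarrow> 0"
  obtains e where "greedy (\<lambda>k. \<bar>x k\<bar>) e"
proof -
  have "(\<lambda>k. \<bar>x k\<bar>) \<longlonglongrightarrow> 0" using assms by (simp add: tendsto_rabs_zero)
  then show ?thesis using greedy_ex[of "\<lambda>k. \<bar>x k\<bar>"] that by auto
qed

lemma rearr_nonneg: "x \<longlonglongrightarrow> 0 \<Longrightarrow> rearr x n \<ge> 0"
  by (metis abs_ge_zero greedy_exists rearr_greedy)

lemma exchange:
  fixes h :: "nat \<Rightarrow> real"
  assumes "finite A" "finite E" "card A \<le> card E" "\<And>k. h k \<ge> 0"
    "\<And>k j. k \<in> A - E \<Longrightarrow> j \<in> E \<Longrightarrow> h k \<le> h j"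
  shows "sum h A \<le> sum h E"
proof -
  have cA: "card (A - E) \<le> card (E - A)"
  proof -
    have "card A = card (A - E) + card (A \<inter> E)"
      using card_Int_Diff[OF assms(1), of E] by simp
    moreover have "card E = card (E - A) + card (A \<inter> E)"
      using card_Int_Diff[OF assms(2), of A] by (simp add: Int_commute)
    ultimately show ?thesis using assms(3) by simp
  qed
  have key: "sum h (A - E) \<le> sum h (E - A)"
  proof (cases "A - E = {}")
    case True then show ?thesis using assms(4) by (metis sum.empty sum_nonneg)
  next
    case False
    define M where "M = Max (h ` (A - E))"
    have fin: "finite (h ` (A - E))" using assms(1) by simp
    have M1: "h k \<le> M" if "k \<in> A - E" for k unfolding M_def using fin that by simp
    have "M \<in> h ` (A - E)" unfolding M_def using fin False by (intro Max_in) auto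
    then obtain k0 where k0: "k0 \<in> A - E" "M = h k0" by auto
    have M2: "M \<le> h j" if "j \<in> E - A" for j using assms(5)[OF k0(1)] that k0(2) by simp
    have "sum h (A - E) \<le> of_nat (card (A - E)) * M"
      using sum_bounded_above[of "A - E" h M] M1 by simp
    also have "\<dots> \<le> of_nat (card (E - A)) * M"
      using cA k0 assms(4) by (intro mult_right_mono) auto
    also have "\<dots> \<le> sum h (E - A)"
      using sum_bounded_below[of "E - A" M h] M2 by simp
    finally show ?thesis .
  qed
  have "sum h A = sum h (A - E) + sum h (A \<inter> E)"
    using assms(1) by (metis Int_commute sum.Int_Diff add.commute)
  moreover have "sum h E = sum h (E - A) + sum h (A \<inter> E)"
    using assms(2) by (metis sum.Int_Diff add.commute inf_commute)
  ultimately show ?thesis using key by simp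
qed

lemma KF1:
  assumes "x \<longlonglongrightarrow> 0"
  shows "\<exists>E. finite E \<and> card E = n \<and> Fk p x n = (\<Sum>k\<in>E. \<bar>x k\<bar> powr p) \<and>
    (\<forall>k j. k \<notin> E \<longrightarrow> j \<in> E \<longrightarrow> \<bar>x k\<bar> \<le> \<bar>x j\<bar>)"
proof -
  obtain e where G: "greedy (\<lambda>k. \<bar>x k\<bar>) e" using greedy_exists[OF assms] .
  have inj: "inj_on e {..<n}" using greedy_inj[OF G] by (meson inj_on_subset subset_UNIV)
  have "Fk p x n = (\<Sum>i<n. \<bar>x (e i)\<bar> powr p)" unfolding Fk_def using rearr_greedy[OF G] by simp
  also have "\<dots> = (\<Sum>k\<in>e ` {..<n}. \<bar>x k\<bar> powr p)" using sum.reindex[OF inj, of "\<lambda>k. \<bar>x k\<bar> powr p"] by simp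
  finally show ?thesis
    using inj greedy_out[OF G] by (intro exI[of _ "e ` {..<n}"]) (auto simp: card_image)
qed

lemma KF2:
  assumes "x \<longlonglongrightarrow> 0" "finite A" "card A \<le> n" "p > 0"
  shows "(\<Sum>k\<in>A. \<bar>x k\<bar> powr p) \<le> Fk p x n"
proof -
  obtain E where E: "finite E" "card E = n" "Fk p x n = (\<Sum>k\<in>E. \<bar>x k\<bar> powr p)"
    "\<And>k j. k \<notin> E \<Longrightarrow> j \<in> E \<Longrightarrow> \<bar>x k\<bar> \<le> \<bar>x j\<bar>"
    using KF1[OF assms(1), of n p] by blast
  have "(\<Sum>k\<in>A. \<bar>x k\<bar> powr p) \<le> (\<Sum>k\<in>E. \<bar>x k\<bar> powr p)"
    using assms E by (intro exchange) (auto intro: powr_mono2)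
  then show ?thesis using E by simp
qed

lemma abel_fin:
  fixes w a :: "nat \<Rightarrow> real"
  shows "(\<Sum>n<N. w n * a n) = (\<Sum>n<N. (w n - w (Suc n)) * (\<Sum>i<Suc n. a i)) + w N * (\<Sum>i<N. a i)"
  by (induction N) (simp_all add: algebra_simps)

lemma w_nonneg: "decseq w \<Longrightarrow> w \<longlonglongrightarrow> 0 \<Longrightarrow> w n \<ge> (0::real)"
  using decseq_ge by blast

lemma w_diff_nonneg: "decseq w \<Longrightarrow> w (Suc n) \<le> w n"
  by (simp add: decseq_Suc_iff)

lemma in_lorentz_iff: "x \<in> lorentz_space w p \<longleftrightarrow> x \<longlonglongrightarrow> 0 \<and> summable (\<lambda>n. w n * rearr x n powr p)"
  by (simp add: lorentz_space_def)

lemma partial_le_rho: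
  assumes "decseq w" "w \<longlonglongrightarrow> 0" "x \<in> lorentz_space w p"
  shows "(\<Sum>n<N. w n * rearr x n powr p) \<le> rho w p x"
  unfolding rho_def using assms
  using w_nonneg[OF assms(1,2)] rearr_nonneg
  by (intro sum_le_suminf) (auto simp: in_lorentz_iff)

lemma rho_nonneg:
  assumes "decseq w" "w \<longlonglongrightarrow> 0" "x \<in> lorentz_space w p"
  shows "rho w p x \<ge> 0"
  unfolding rho_def using assms
  using w_nonneg[OF assms(1,2)] rearr_nonneg
  by (intro suminf_nonneg) (auto simp: in_lorentz_iff)

lemma partial_abel:
  "(\<Sum>n<N. w n * rearr x n powr p) = (\<Sum>n<N. (w n - w (Suc n)) * Fk p x (Suc n)) + w N * Fk p x N"
  unfolding Fk_def by (rule abel_fin)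

lemma rho_bounded:
  assumes "decseq w" "w \<longlonglongrightarrow> 0" "s \<longlonglongrightarrow> 0"
    and "\<And>N. (\<Sum>n<N. w n * rearr s n powr p) \<le> B"
  shows "s \<in> lorentz_space w p \<and> rho w p s \<le> B"
proof -
  have nn: "\<And>n. 0 \<le> w n * rearr s n powr p"
    using assms w_nonneg[OF assms(1,2)] by auto
  have sm: "summable (\<lambda>n. w n * rearr s n powr p)"
    using nn assms(4) by (rule summableI_nonneg_bounded)
  moreover have "rho w p s \<le> B" unfolding rho_def using sm nn assms(4)
    by (intro suminf_le_const) auto
  ultimately show ?thesis using assms(3) by (simp add: in_lorentz_iff)
qed

lemma rho_dom:
  assumes "decseq w" "w \<longlonglongrightarrow> 0" "x \<in> lorentz_space w p" "y \<in> lorentz_space w p" "s \<longlonglongrightarrow> 0"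
    and F: "\<And>n. Fk p s n \<le> Fk p x n + Fk p y n"
  shows "s \<in> lorentz_space w p \<and> rho w p s \<le> rho w p x + rho w p y"
proof (rule rho_bounded[OF assms(1,2,5)])
  fix N
  have d: "\<And>n. 0 \<le> w n - w (Suc n)" using w_diff_nonneg[OF assms(1)] by simp
  have "(\<Sum>n<N. w n * rearr s n powr p)
      \<le> (\<Sum>n<N. (w n - w (Suc n)) * (Fk p x (Suc n) + Fk p y (Suc n))) + w N * (Fk p x N + Fk p y N)"
    unfolding partial_abel
    by (intro add_mono sum_mono mult_left_mono F d w_nonneg assms(1,2))
  also have "\<dots> = (\<Sum>n<N. w n * rearr x n powr p) + (\<Sum>n<N. w n * rearr y n powr p)"
    unfolding partial_abel by (simp add: distrib_left distrib_right sum.distrib)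
  also have "\<dots> \<le> rho w p x + rho w p y"
    by (intro add_mono partial_le_rho assms)
  finally show "(\<Sum>n<N. w n * rearr s n powr p) \<le> rho w p x + rho w p y" .
qed

lemma Fk_dom:
  assumes "x \<longlonglongrightarrow> 0" "y \<longlonglongrightarrow> 0" "s \<longlonglongrightarrow> 0" "p > 0"
    and "\<And>k. \<bar>s k\<bar> powr p \<le> \<bar>x k\<bar> powr p + \<bar>y k\<bar> powr p"
  shows "Fk p s n \<le> Fk p x n + Fk p y n"
proof -
  obtain E where E: "finite E" "card E = n" "Fk p s n = (\<Sum>k\<in>E. \<bar>s k\<bar> powr p)"
    using KF1[OF assms(3), of n p] by blast
  have "Fk p s n \<le> (\<Sum>k\<in>E. \<bar>x k\<bar> powr p) + (\<Sum>k\<in>E. \<bar>y k\<bar> powr p)"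
    unfolding E(3) sum.distrib[symmetric] by (intro sum_mono assms(5))
  also have "\<dots> \<le> Fk p x n + Fk p y n"
    using E by (intro add_mono KF2 assms) auto
  finally show ?thesis .
qed

lemma master:
  assumes "decseq w" "w \<longlonglongrightarrow> 0" "p > 0" "x \<in> lorentz_space w p" "y \<in> lorentz_space w p" "s \<longlonglongrightarrow> 0"
    and "\<And>k. \<bar>s k\<bar> powr p \<le> \<bar>x k\<bar> powr p + \<bar>y k\<bar> powr p"
  shows "s \<in> lorentz_space w p \<and> rho w p s \<le> rho w p x + rho w p y"
  using assms by (intro rho_dom Fk_dom) (auto simp: in_lorentz_iff)

lemma rearr_zero: "rearr (\<lambda>k. 0) n = 0"
proof -
  have "(\<lambda>k. 0::real) \<longlonglongrightarrow> 0" by simp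
  then have "rearr (\<lambda>k. 0) n \<ge> 0" by (rule rearr_nonneg)
  moreover have "rearr (\<lambda>k. 0) n \<le> 0" by (rule rearr_le) auto
  ultimately show ?thesis by simp
qed

lemma zero_in_lorentz: "p > 0 \<Longrightarrow> (\<lambda>k. 0) \<in> lorentz_space w p" and rho_zero: "p > 0 \<Longrightarrow> rho w p (\<lambda>k. 0) = 0"
  by (simp_all add: in_lorentz_iff rearr_zero rho_def)

lemma rearr_scale:
  assumes "x \<longlonglongrightarrow> 0"
  shows "rearr (\<lambda>k. c * x k) n = \<bar>c\<bar> * rearr x n"
proof -
  obtain e where G: "greedy (\<lambda>k. \<bar>x k\<bar>) e" using greedy_exists[OF assms] .
  have G': "greedy (\<lambda>k. \<bar>c * x k\<bar>) e"
    using G unfolding greedy_def by (auto simp: abs_mult intro: mult_left_mono)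
  show ?thesis using rearr_greedy[OF G] rearr_greedy[OF G'] by (simp add: abs_mult)
qed

lemma scale_lorentz:
  assumes "x \<in> lorentz_space w p" "p > 0"
  shows "(\<lambda>k. c * x k) \<in> lorentz_space w p \<and> rho w p (\<lambda>k. c * x k) = \<bar>c\<bar> powr p * rho w p x"
proof -
  have x0: "x \<longlonglongrightarrow> 0" using assms by (simp add: in_lorentz_iff)
  have e: "(\<lambda>n. w n * rearr (\<lambda>k. c * x k) n powr p) = (\<lambda>n. \<bar>c\<bar> powr p * (w n * rearr x n powr p))"
    using rearr_scale[OF x0] rearr_nonneg[OF x0] by (auto simp: powr_mult)
  have "(\<lambda>k. c * x k) \<longlonglongrightarrow> 0" using tendsto_mult_right_zero[OF x0] by simp
  then show ?thesis using assms unfolding in_lorentz_iff rho_def e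
    by (auto intro: summable_mult suminf_mult)
qed


lemma rearr_mono:
  assumes "x \<longlonglongrightarrow> 0" "\<And>k. \<bar>y k\<bar> \<le> \<bar>x k\<bar>"
  shows "rearr y n \<le> rearr x n"
proof -
  obtain e where G: "greedy (\<lambda>k. \<bar>x k\<bar>) e" using greedy_exists[OF assms(1)] .
  let ?v = "\<bar>x (e n)\<bar>"
  have sub: "{k. ?v < \<bar>x k\<bar>} \<subseteq> e ` {..<n}"
    using G unfolding greedy_def by (smt (verit) mem_Collect_eq subsetI)
  have sub2: "{k. ?v < \<bar>y k\<bar>} \<subseteq> {k. ?v < \<bar>x k\<bar>}" using assms(2) by (auto intro: less_le_trans)
  have "card {k. ?v < \<bar>y k\<bar>} \<le> card (e ` {..<n})"
    by (rule card_mono[OF _ subset_trans[OF sub2 sub]]) simp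
  also have "\<dots> \<le> n" using card_image_le[of "{..<n}" e] by simp
  finally have "?v \<in> {s. 0 \<le> s \<and> finite {k. s < \<bar>y k\<bar>} \<and> card {k. s < \<bar>y k\<bar>} \<le> n}"
    using finite_subset[OF subset_trans[OF sub2 sub]] by simp
  then have "rearr y n \<le> ?v" unfolding rearr_def
    by (rule cInf_lower) (auto intro: bdd_belowI[of _ 0])
  then show ?thesis using rearr_greedy[OF G] by simp
qed

lemma rearr0_ge:
  assumes "x \<longlonglongrightarrow> 0"
  shows "\<bar>x k\<bar> \<le> rearr x 0"
proof -
  obtain e where G: "greedy (\<lambda>k. \<bar>x k\<bar>) e" using greedy_exists[OF assms(1)] .
  show ?thesis using G rearr_greedy[OF G, of 0] unfolding greedy_def by auto
qed

lemma null_compare: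
  fixes f g :: "nat \<Rightarrow> real"
  assumes "g \<longlonglongrightarrow> 0" "\<And>k. \<bar>f k\<bar> \<le> g k"
  shows "f \<longlonglongrightarrow> 0"
  using assms(2) by (intro Lim_null_comparison[OF always_eventually assms(1)]) auto

context
  fixes w :: "nat \<Rightarrow> real" and p :: real
  assumes wd: "decseq w" and w0: "w \<longlonglongrightarrow> 0" and w1: "w 0 = 1" and p1: "p \<ge> 1"
begin

lemma pp: "p > 0" using p1 by simp

lemma wnn: "w n \<ge> 0" using w_nonneg[OF wd w0] .

lemma powr_le: "0 \<le> a \<Longrightarrow> a \<le> b \<Longrightarrow> a powr p \<le> b powr p"
  using powr_mono2[of p a b] pp by simp

lemma coord_le_rho:
  assumes "x \<in> lorentz_space w p"
  shows "\<bar>x k\<bar> powr p \<le> rho w p x"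
proof -
  have x0: "x \<longlonglongrightarrow> 0" using assms by (simp add: in_lorentz_iff)
  have "\<bar>x k\<bar> powr p \<le> rearr x 0 powr p" by (rule powr_mono2) (use pp rearr0_ge[OF x0] in auto)
  also have "\<dots> = (\<Sum>n<1. w n * rearr x n powr p)" using w1 by simp
  also have "\<dots> \<le> rho w p x" by (rule partial_le_rho[OF wd w0 assms])
  finally show ?thesis .
qed

lemma mono_lorentz:
  assumes "x \<in> lorentz_space w p" "\<And>k. \<bar>y k\<bar> \<le> \<bar>x k\<bar>"
  shows "y \<in> lorentz_space w p \<and> rho w p y \<le> rho w p x"
proof -
  have x0: "x \<longlonglongrightarrow> 0" using assms by (simp add: in_lorentz_iff)
  have y0: "y \<longlonglongrightarrow> 0"
  proof -
    show ?thesis using assms(2) by (intro null_compare[OF tendsto_rabs_zero[OF x0]]) auto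
  qed
  have "y \<in> lorentz_space w p \<and> rho w p y \<le> rho w p x + rho w p (\<lambda>k. 0)"
    using assms(2) by (intro master[OF wd w0 pp assms(1) zero_in_lorentz[OF pp] y0]) (auto intro: powr_le)
  then show ?thesis using rho_zero[OF pp] by simp
qed

lemma powr_sum_le:
  fixes a b c :: real
  assumes "\<bar>c\<bar> \<le> \<bar>a\<bar> + \<bar>b\<bar>"
  shows "\<bar>c\<bar> powr p \<le> \<bar>2 * a\<bar> powr p + \<bar>2 * b\<bar> powr p"
proof -
  have "\<bar>c\<bar> \<le> max \<bar>2 * a\<bar> \<bar>2 * b\<bar>" using assms by auto
  then have "\<bar>c\<bar> powr p \<le> max \<bar>2 * a\<bar> \<bar>2 * b\<bar> powr p" by (intro powr_le) auto
  also have "\<dots> \<le> \<bar>2 * a\<bar> powr p + \<bar>2 * b\<bar> powr p" by (simp add: max_def)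
  finally show ?thesis .
qed

lemma quasi_lorentz:
  assumes "x \<in> lorentz_space w p" "y \<in> lorentz_space w p" "\<And>k. \<bar>s k\<bar> \<le> \<bar>x k\<bar> + \<bar>y k\<bar>"
  shows "s \<in> lorentz_space w p \<and> rho w p s \<le> 2 powr p * (rho w p x + rho w p y)"
proof -
  have x0: "x \<longlonglongrightarrow> 0" and y0: "y \<longlonglongrightarrow> 0" using assms by (auto simp: in_lorentz_iff)
  have s0: "s \<longlonglongrightarrow> 0"
  proof -
    have "(\<lambda>k. \<bar>x k\<bar> + \<bar>y k\<bar>) \<longlonglongrightarrow> 0"
      using tendsto_add[OF tendsto_rabs_zero[OF x0] tendsto_rabs_zero[OF y0]] by simp
    then show ?thesis using assms(3) by (rule null_compare)
  qed
  have X: "(\<lambda>k. 2 * x k) \<in> lorentz_space w p" "(\<lambda>k. 2 * y k) \<in> lorentz_space w p"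
    using scale_lorentz[OF assms(1) pp] scale_lorentz[OF assms(2) pp] by auto
  have "s \<in> lorentz_space w p \<and> rho w p s \<le> rho w p (\<lambda>k. 2 * x k) + rho w p (\<lambda>k. 2 * y k)"
    by (intro master[OF wd w0 pp X s0] powr_sum_le assms(3))
  then show ?thesis using scale_lorentz[OF assms(1) pp, of 2] scale_lorentz[OF assms(2) pp, of 2]
    by (simp add: distrib_left)
qed

lemma disj_lorentz:
  assumes "x \<in> lorentz_space w p" "y \<in> lorentz_space w p" "\<And>k. x k = 0 \<or> y k = 0"
  shows "(\<lambda>k. x k + y k) \<in> lorentz_space w p \<and> rho w p (\<lambda>k. x k + y k) \<le> rho w p x + rho w p y"
proof -
  have x0: "x \<longlonglongrightarrow> 0" and y0: "y \<longlonglongrightarrow> 0" using assms by (auto simp: in_lorentz_iff)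
  have s0: "(\<lambda>k. x k + y k) \<longlonglongrightarrow> 0" using tendsto_add[OF x0 y0] by simp
  show ?thesis
  proof (rule master[OF wd w0 pp assms(1,2) s0])
    fix k show "\<bar>x k + y k\<bar> powr p \<le> \<bar>x k\<bar> powr p + \<bar>y k\<bar> powr p"
      using assms(3)[of k] by auto
  qed
qed

lemma head_lorentz:
  assumes "\<And>k. k \<ge> N \<Longrightarrow> s k = 0"
  shows "s \<in> lorentz_space w p \<and> rho w p s \<le> (\<Sum>k<N. \<bar>s k\<bar> powr p)"
proof -
  let ?Q = "(\<Sum>k<N. \<bar>s k\<bar> powr p)"
  have s0: "s \<longlonglongrightarrow> 0"
  proof -
    have "eventually (\<lambda>k. s k = 0) sequentially" using assms by (auto simp: eventually_sequentially)
    then show ?thesis by (intro Lim_transform_eventually[OF tendsto_const]) (auto elim!: eventually_mono)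
  qed
  have F: "Fk p s n \<le> ?Q" for n
  proof -
    obtain E where E: "finite E" "card E = n" "Fk p s n = (\<Sum>k\<in>E. \<bar>s k\<bar> powr p)"
      using KF1[OF s0, of n p] by blast
    have "(\<Sum>k\<in>E. \<bar>s k\<bar> powr p) = (\<Sum>k\<in>E \<inter> {..<N}. \<bar>s k\<bar> powr p)"
      using E(1) assms by (intro sum.mono_neutral_right) (auto, meson not_le)
    also have "\<dots> \<le> ?Q" by (intro sum_mono2) auto
    finally show ?thesis using E by simp
  qed
  show ?thesis
  proof (rule rho_bounded[OF wd w0 s0])
    fix M
    have d: "\<And>n. 0 \<le> w n - w (Suc n)" using w_diff_nonneg[OF wd] by simp
    have "(\<Sum>n<M. w n * rearr s n powr p) \<le> (\<Sum>n<M. (w n - w (Suc n)) * ?Q) + w M * ?Q"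
      unfolding partial_abel by (intro add_mono sum_mono mult_left_mono F d wnn)
    also have "\<dots> = (w 0 - w M) * ?Q + w M * ?Q"
      by (simp add: sum_distrib_right[symmetric] sum_lessThan_telescope')
    also have "\<dots> = ?Q" using w1 by (simp add: algebra_simps)
    finally show "(\<Sum>n<M. w n * rearr s n powr p) \<le> ?Q" .
  qed
qed

lemma tail_lorentz:
  assumes "x \<in> lorentz_space w p"
  shows "(\<lambda>N. rho w p (\<lambda>k. if N \<le> k then x k else 0)) \<longlonglongrightarrow> 0"
proof -
  have x0: "x \<longlonglongrightarrow> 0" and sm: "summable (\<lambda>n. w n * rearr x n powr p)"
    using assms by (auto simp: in_lorentz_iff)
  define t where "t N = (\<lambda>k. if N \<le> k then x k else (0::real))" for N
  have tle: "\<bar>t N k\<bar> \<le> \<bar>x k\<bar>" for N k by (simp add: t_def)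
  have t0: "t N \<longlonglongrightarrow> 0" for N
    using mono_lorentz[OF assms tle[of N]] by (simp add: in_lorentz_iff)
  have lim: "(\<lambda>N. rearr (t N) n) \<longlonglongrightarrow> 0" for n
  proof (rule order_tendstoI)
    fix e :: real assume "e > 0"
    then have "e / 2 > 0" by simp
    have "eventually (\<lambda>k. \<bar>x k\<bar> < e / 2) sequentially"
      using order_tendstoD(2)[OF tendsto_rabs_zero[OF x0] \<open>e / 2 > 0\<close>] by simp
    then obtain K where K: "\<And>k. k \<ge> K \<Longrightarrow> \<bar>x k\<bar> < e / 2" by (auto simp: eventually_sequentially)
    have "rearr (t N) n \<le> e / 2" if "N \<ge> K" for N
      using that K \<open>e > 0\<close> by (intro rearr_le) (auto simp: t_def less_imp_le)
    then have "eventually (\<lambda>N. rearr (t N) n \<le> e / 2) sequentially"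
      by (auto simp: eventually_sequentially)
    then show "eventually (\<lambda>N. rearr (t N) n < e) sequentially"
      using \<open>e > 0\<close> by (auto elim: eventually_mono)
  next
    fix e :: real assume "e < 0"
    then show "eventually (\<lambda>N. e < rearr (t N) n) sequentially"
      using rearr_nonneg[OF t0] by (auto intro: always_eventually less_le_trans)
  qed
  have lim2: "(\<lambda>N. w n * rearr (t N) n powr p) \<longlonglongrightarrow> 0" for n
    using tendsto_mult_right_zero[OF tendsto_zero_powrI[OF lim[of n] tendsto_const _ pp], of "w n"]
      rearr_nonneg[OF t0] by auto
  have rm: "\<And>N n. rearr (t N) n \<le> rearr x n" using rearr_mono[OF x0 tle] by (simp add: t_def)
  have "(\<lambda>N. \<Sum>n. w n * rearr (t N) n powr p) \<longlonglongrightarrow> (\<Sum>n. (0::real))"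
  proof (rule conjunct2[OF conjunct2[OF tannerys_theorem]])
    show "\<And>n. (\<lambda>N. w n * rearr (t N) n powr p) \<longlonglongrightarrow> 0" by (rule lim2)
    show "summable (\<lambda>n. w n * rearr x n powr p)" by (rule sm)
    show "\<forall>\<^sub>F (n, N) in at_top \<times>\<^sub>F sequentially. norm (w n * rearr (t N) n powr p) \<le> w n * rearr x n powr p"
      using rm rearr_nonneg[OF t0] wnn
      by (intro always_eventually) (auto intro!: mult_left_mono powr_le)
  qed simp
  then show ?thesis by (simp add: rho_def t_def)
qed

end


definition sig :: "real \<Rightarrow> (nat \<Rightarrow> real) \<Rightarrow> real" where
  "sig p y = (\<Sum>k. \<bar>y k\<bar> powr p)"

context
  fixes p :: real
  assumes p1: "p \<ge> 1"
begin

lemma p0: "p > 0" using p1 by simp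

lemma powr_le': "0 \<le> a \<Longrightarrow> a \<le> b \<Longrightarrow> a powr p \<le> b powr p"
  using powr_mono2[of p a b] p0 by simp

lemma conv_ineq:
  fixes a b t :: real
  assumes "0 \<le> a" "0 \<le> b" "0 \<le> t" "t \<le> 1"
  shows "((1 - t) * a + t * b) powr p \<le> (1 - t) * a powr p + t * b powr p"
proof -
  have tp: "s powr p \<le> s" if "0 \<le> s" "s \<le> 1" for s :: real
    using powr_mono'[of 1 p s] that p1 by simp
  consider "a = 0" | "b = 0" | "a > 0" "b > 0" using assms by linarith
  then show ?thesis
  proof cases
    case 1
    have "(t * b) powr p = t powr p * b powr p" using assms by (simp add: powr_mult)
    also have "\<dots> \<le> t * b powr p" using tp[OF assms(3,4)] by (intro mult_right_mono) auto
    finally show ?thesis using 1 by simp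
  next
    case 2
    have "((1 - t) * a) powr p = (1 - t) powr p * a powr p" using assms by (simp add: powr_mult)
    also have "\<dots> \<le> (1 - t) * a powr p" using tp[of "1 - t"] assms by (intro mult_right_mono) auto
    finally show ?thesis using 2 by simp
  next
    case 3
    show ?thesis using convex_onD[OF powr_convex[OF p1], of t a b] 3 assms by simp
  qed
qed

lemma in_ell_iff: "y \<in> ell_space p \<longleftrightarrow> summable (\<lambda>k. \<bar>y k\<bar> powr p)"
  by (simp add: ell_space_def)

lemma sig_nonneg: "y \<in> ell_space p \<Longrightarrow> sig p y \<ge> 0"
  unfolding sig_def by (auto intro: suminf_nonneg simp: in_ell_iff)

lemma ell_norm_sig: "ell_norm p y = sig p y powr (1 / p)"
  by (simp add: ell_norm_def sig_def)

lemma ell_norm_nonneg: "ell_norm p y \<ge> 0"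
  by (simp add: ell_norm_sig)

lemma sig_ell_norm: "y \<in> ell_space p \<Longrightarrow> sig p y = ell_norm p y powr p"
  using sig_nonneg[of y] p0 by (simp add: ell_norm_sig powr_powr)

lemma coord_le_sig:
  assumes "y \<in> ell_space p"
  shows "\<bar>y k\<bar> powr p \<le> sig p y"
proof -
  have s: "summable (\<lambda>k. \<bar>y k\<bar> powr p)" using assms by (simp add: in_ell_iff)
  have "\<bar>y k\<bar> powr p \<le> (\<Sum>i<Suc k. \<bar>y i\<bar> powr p)" by (rule member_le_sum) auto
  also have "\<dots> \<le> sig p y" unfolding sig_def by (rule sum_le_suminf[OF s]) auto
  finally show ?thesis .
qed

lemma root_mono: "0 \<le> a \<Longrightarrow> a \<le> b \<Longrightarrow> a powr (1/p) \<le> b powr (1/p)"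
  using powr_mono2[of "1/p" a b] p0 by simp

lemma coord_le_ell:
  assumes "y \<in> ell_space p"
  shows "\<bar>y k\<bar> \<le> ell_norm p y"
proof -
  have "(\<bar>y k\<bar> powr p) powr (1/p) \<le> sig p y powr (1/p)" by (intro root_mono coord_le_sig assms) auto
  then show ?thesis using p0 by (simp add: ell_norm_sig powr_powr)
qed

lemma minkowski:
  assumes "y \<in> ell_space p" "z \<in> ell_space p" "\<And>k. \<bar>s k\<bar> \<le> \<bar>y k\<bar> + \<bar>z k\<bar>"
  shows "s \<in> ell_space p \<and> ell_norm p s \<le> ell_norm p y + ell_norm p z"
proof -
  define A where "A = ell_norm p y"
  define B where "B = ell_norm p z"
  have A0: "A \<ge> 0" "B \<ge> 0" by (simp_all add: A_def B_def ell_norm_nonneg)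
  have sy: "summable (\<lambda>k. \<bar>y k\<bar> powr p)" "summable (\<lambda>k. \<bar>z k\<bar> powr p)" using assms by (auto simp: in_ell_iff)
  have sigA: "(\<Sum>k. \<bar>y k\<bar> powr p) = A powr p" "(\<Sum>k. \<bar>z k\<bar> powr p) = B powr p"
    using sig_ell_norm[OF assms(1)] sig_ell_norm[OF assms(2)] by (auto simp: A_def B_def sig_def)
  show ?thesis
  proof (cases "A = 0 \<or> B = 0")
    case True
    then consider "A = 0" | "B = 0" by blast
    then show ?thesis
    proof cases
      case 1
      have "\<bar>y k\<bar> = 0" for k using coord_le_ell[OF assms(1), of k] 1 by (simp add: A_def)
      then have le: "\<bar>s k\<bar> \<le> \<bar>z k\<bar>" for k using assms(3)[of k] by simp
      have sm: "summable (\<lambda>k. \<bar>s k\<bar> powr p)"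
        by (rule summable_comparison_test'[OF sy(2)]) (use le in \<open>auto intro: powr_le'\<close>)
      moreover have "(\<Sum>k. \<bar>s k\<bar> powr p) \<le> (\<Sum>k. \<bar>z k\<bar> powr p)"
        using le by (intro suminf_le sm sy(2) powr_le') auto
      ultimately have "ell_norm p s \<le> ell_norm p z" unfolding ell_norm_def
        by (intro root_mono suminf_nonneg) auto
      then show ?thesis using 1 sm by (simp add: in_ell_iff A_def)
    next
      case 2
      have "\<bar>z k\<bar> = 0" for k using coord_le_ell[OF assms(2), of k] 2 by (simp add: B_def)
      then have le: "\<bar>s k\<bar> \<le> \<bar>y k\<bar>" for k using assms(3)[of k] by simp
      have sm: "summable (\<lambda>k. \<bar>s k\<bar> powr p)"
        by (rule summable_comparison_test'[OF sy(1)]) (use le in \<open>auto intro: powr_le'\<close>)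
      moreover have "(\<Sum>k. \<bar>s k\<bar> powr p) \<le> (\<Sum>k. \<bar>y k\<bar> powr p)"
        using le by (intro suminf_le sm sy(1) powr_le') auto
      ultimately have "ell_norm p s \<le> ell_norm p y" unfolding ell_norm_def
        by (intro root_mono suminf_nonneg) auto
      then show ?thesis using 2 sm by (simp add: in_ell_iff B_def)
    qed
  next
    case False
    then have Ap: "A > 0" "B > 0" using A0 by auto
    define t where "t = B / (A + B)"
    have t: "0 \<le> t" "t \<le> 1" "1 - t = A / (A + B)" using Ap by (auto simp: t_def field_simps)
    define f where "f k = (A + B) powr p * ((1 - t) * (\<bar>y k\<bar> powr p / A powr p) + t * (\<bar>z k\<bar> powr p / B powr p))" for k
    have bound: "\<bar>s k\<bar> powr p \<le> f k" for k
    proof -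
      have e1: "(1 - t) * (\<bar>y k\<bar> / A) = \<bar>y k\<bar> / (A + B)" using Ap unfolding t(3) by simp
      have e2: "t * (\<bar>z k\<bar> / B) = \<bar>z k\<bar> / (A + B)" using Ap unfolding t_def by simp
      have "\<bar>y k\<bar> + \<bar>z k\<bar> = (A + B) * ((1 - t) * (\<bar>y k\<bar> / A) + t * (\<bar>z k\<bar> / B))"
        unfolding e1 e2 using Ap by (simp add: add_divide_distrib[symmetric])
      then have "\<bar>s k\<bar> powr p \<le> ((A + B) * ((1 - t) * (\<bar>y k\<bar> / A) + t * (\<bar>z k\<bar> / B))) powr p"
        using assms(3)[of k] by (intro powr_le') auto
      also have "\<dots> = (A + B) powr p * ((1 - t) * (\<bar>y k\<bar> / A) + t * (\<bar>z k\<bar> / B)) powr p"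
        using Ap t by (simp add: powr_mult)
      also have "\<dots> \<le> (A + B) powr p * ((1 - t) * (\<bar>y k\<bar> / A) powr p + t * (\<bar>z k\<bar> / B) powr p)"
        using Ap t by (intro mult_left_mono conv_ineq) auto
      also have "\<dots> = f k" using Ap by (simp add: f_def powr_divide)
      finally show ?thesis .
    qed
    have fs: "f sums ((A + B) powr p * ((1 - t) * (A powr p / A powr p) + t * (B powr p / B powr p)))"
      unfolding f_def
      using sy[THEN summable_sums] sigA
      by (intro sums_mult sums_add sums_divide) auto
    then have fs': "f sums ((A + B) powr p)" using Ap by simp
    have nn: "0 \<le> \<bar>s k\<bar> powr p" for k by simp
    have sm: "summable (\<lambda>k. \<bar>s k\<bar> powr p)"
      by (rule summable_comparison_test'[OF sums_summable[OF fs']]) (use bound in auto)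
    have "(\<Sum>k. \<bar>s k\<bar> powr p) \<le> (A + B) powr p"
      using suminf_le[OF bound sm sums_summable[OF fs']] sums_unique[OF fs'] by simp
    then have "(\<Sum>k. \<bar>s k\<bar> powr p) powr (1/p) \<le> ((A + B) powr p) powr (1/p)"
      using nn by (intro root_mono suminf_nonneg sm) auto
    also have "\<dots> = A + B" using Ap p0 by (simp add: powr_powr)
    finally show ?thesis using sm by (simp add: in_ell_iff ell_norm_def A_def B_def)
  qed
qed

lemma zero_ell: "(\<lambda>k. 0) \<in> ell_space p" and ell_norm_zero: "ell_norm p (\<lambda>k. 0) = 0"
  using p0 by (simp_all add: in_ell_iff ell_norm_def)

lemma mono_ell:
  assumes "y \<in> ell_space p" "\<And>k. \<bar>s k\<bar> \<le> \<bar>y k\<bar>"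
  shows "s \<in> ell_space p \<and> ell_norm p s \<le> ell_norm p y"
  using minkowski[OF assms(1) zero_ell] assms(2) ell_norm_zero by simp

lemma scale_ell:
  assumes "y \<in> ell_space p"
  shows "(\<lambda>k. c * y k) \<in> ell_space p \<and> ell_norm p (\<lambda>k. c * y k) = \<bar>c\<bar> * ell_norm p y"
proof -
  have e: "(\<lambda>k. \<bar>c * y k\<bar> powr p) = (\<lambda>k. \<bar>c\<bar> powr p * \<bar>y k\<bar> powr p)"
    by (simp add: abs_mult powr_mult)
  have s: "summable (\<lambda>k. \<bar>y k\<bar> powr p)" using assms by (simp add: in_ell_iff)
  have "ell_norm p (\<lambda>k. c * y k) = (\<bar>c\<bar> powr p * (\<Sum>k. \<bar>y k\<bar> powr p)) powr (1/p)"
    unfolding ell_norm_def e using suminf_mult[OF s] by simp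
  also have "\<dots> = \<bar>c\<bar> * ell_norm p y"
    using p0 by (simp add: powr_mult suminf_nonneg[OF s] powr_powr ell_norm_def)
  finally show ?thesis using s e by (simp add: in_ell_iff summable_mult)
qed

lemma disj_sig:
  assumes "y \<in> ell_space p" "z \<in> ell_space p" "\<And>k. y k = 0 \<or> z k = 0"
  shows "sig p (\<lambda>k. y k + z k) = sig p y + sig p z"
proof -
  have "(\<lambda>k. \<bar>y k + z k\<bar> powr p) = (\<lambda>k. \<bar>y k\<bar> powr p + \<bar>z k\<bar> powr p)"
  proof
    fix k show "\<bar>y k + z k\<bar> powr p = \<bar>y k\<bar> powr p + \<bar>z k\<bar> powr p" using assms(3)[of k] p0 by auto
  qed
  then show ?thesis using assms by (simp add: sig_def in_ell_iff suminf_add)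
qed

lemma sig_scale: "y \<in> ell_space p \<Longrightarrow> sig p (\<lambda>k. c * y k) = \<bar>c\<bar> powr p * sig p y"
  using scale_ell[of y c] by (simp add: sig_ell_norm powr_mult ell_norm_nonneg)

lemma tail_ell:
  assumes "y \<in> ell_space p"
  shows "(\<lambda>N. ell_norm p (\<lambda>k. if N \<le> k then y k else 0)) \<longlonglongrightarrow> 0"
proof -
  have s: "summable (\<lambda>k. \<bar>y k\<bar> powr p)" using assms by (simp add: in_ell_iff)
  have e: "sig p (\<lambda>k. if N \<le> k then y k else 0) = (\<Sum>k. \<bar>y k\<bar> powr p) - (\<Sum>k<N. \<bar>y k\<bar> powr p)" for N
  proof -
    have "(\<lambda>k. \<bar>if N \<le> k then y k else 0\<bar> powr p) = (\<lambda>k. \<bar>y k\<bar> powr p - (if k < N then \<bar>y k\<bar> powr p else 0))"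
      using p0 by (auto simp: fun_eq_iff)
    moreover have h2: "summable (\<lambda>k. if k < N then \<bar>y k\<bar> powr p else 0)"
      by (rule summable_finite[of "{..<N}"]) auto
    moreover have "(\<Sum>k. if k < N then \<bar>y k\<bar> powr p else 0) = (\<Sum>k<N. \<bar>y k\<bar> powr p)"
      by (subst suminf_finite[of "{..<N}"]) auto
    ultimately show ?thesis unfolding sig_def using suminf_diff[OF s h2] by simp
  qed
  have "(\<lambda>N. (\<Sum>k. \<bar>y k\<bar> powr p) - (\<Sum>k<N. \<bar>y k\<bar> powr p)) \<longlonglongrightarrow> (\<Sum>k. \<bar>y k\<bar> powr p) - (\<Sum>k. \<bar>y k\<bar> powr p)"
    by (intro tendsto_diff tendsto_const summable_LIMSEQ s)
  then have "(\<lambda>N. sig p (\<lambda>k. if N \<le> k then y k else 0)) \<longlonglongrightarrow> 0" unfolding e by simp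
  then show ?thesis unfolding ell_norm_sig
    by (rule tendsto_zero_powrI[OF _ tendsto_const]) (use p0 sig_nonneg mono_ell[OF assms] in auto)
qed

lemma head_ell:
  assumes "\<And>k. k \<ge> N \<Longrightarrow> s k = 0"
  shows "s \<in> ell_space p \<and> sig p s = (\<Sum>k<N. \<bar>s k\<bar> powr p)"
proof -
  have z: "\<And>k. k \<notin> {..<N} \<Longrightarrow> \<bar>s k\<bar> powr p = 0" using assms by auto
  show ?thesis using summable_finite[of "{..<N}" "\<lambda>k. \<bar>s k\<bar> powr p", OF _ z]
      suminf_finite[of "{..<N}" "\<lambda>k. \<bar>s k\<bar> powr p", OF _ z]
    by (simp add: in_ell_iff sig_def)
qed

end


definition tl_of :: "nat \<Rightarrow> (nat \<Rightarrow> real) \<Rightarrow> nat \<Rightarrow> real" where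
  "tl_of N x = (\<lambda>k. if N \<le> k then x k else 0)"

definition hd_of :: "nat \<Rightarrow> (nat \<Rightarrow> real) \<Rightarrow> nat \<Rightarrow> real" where
  "hd_of N x = (\<lambda>k. if k < N then x k else 0)"

locale setting =
  fixes w :: "nat \<Rightarrow> real" and p :: real and T :: "(nat \<Rightarrow> real) \<Rightarrow> (nat \<Rightarrow> real)" and C :: real
  assumes wd: "decseq w" and w0: "w \<longlonglongrightarrow> 0" and w1: "w 0 = 1" and p1: "p \<ge> 1"
    and TY: "\<And>x. x \<in> lorentz_space w p \<Longrightarrow> T x \<in> ell_space p"
    and Tadd: "\<And>x y. x \<in> lorentz_space w p \<Longrightarrow> y \<in> lorentz_space w p \<Longrightarrow> T (\<lambda>k. x k + y k) = (\<lambda>k. T x k + T y k)"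
    and Tsc: "\<And>x c. x \<in> lorentz_space w p \<Longrightarrow> T (\<lambda>k. c * x k) = (\<lambda>k. c * T x k)"
    and TC: "\<And>x. x \<in> lorentz_space w p \<Longrightarrow> ell_norm p (T x) \<le> C * lorentz_norm w p x"
    and C1: "C \<ge> 1"
begin

abbreviation "X \<equiv> lorentz_space w p"
abbreviation "Y \<equiv> ell_space p"
abbreviation "ND \<equiv> lorentz_norm w p"
abbreviation "NL \<equiv> ell_norm p"

lemma pp: "p > 0" using p1 by simp

lemma lnd: "ND x = rho w p x powr (1/p)"
  by (simp add: lorentz_norm_def rho_def)

lemma ND_nonneg: "ND x \<ge> 0" by (simp add: lnd)

lemma rho_ND: "x \<in> X \<Longrightarrow> rho w p x = ND x powr p"
  using rho_nonneg[OF wd w0, of x p] pp by (simp add: lnd powr_powr)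

lemma rt: "0 \<le> a \<Longrightarrow> a \<le> b \<Longrightarrow> a powr (1/p) \<le> b powr (1/p)"
  using powr_mono2[of "1/p" a b] pp by simp

lemma coordND: "x \<in> X \<Longrightarrow> \<bar>x k\<bar> \<le> ND x"
proof -
  assume x: "x \<in> X"
  have "(\<bar>x k\<bar> powr p) powr (1/p) \<le> rho w p x powr (1/p)"
    by (intro rt coord_le_rho[OF wd w0 w1 p1 x]) auto
  then show ?thesis using pp by (simp add: lnd powr_powr)
qed

lemma monoND: "x \<in> X \<Longrightarrow> (\<And>k. \<bar>y k\<bar> \<le> \<bar>x k\<bar>) \<Longrightarrow> y \<in> X \<and> ND y \<le> ND x"
  using mono_lorentz[OF wd w0 w1 p1, of x y] rho_nonneg[OF wd w0, of y p]
  by (auto simp: lnd intro: rt)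

lemma scaleND:
  assumes x: "x \<in> X"
  shows "(\<lambda>k. c * x k) \<in> X \<and> ND (\<lambda>k. c * x k) = \<bar>c\<bar> * ND x"
proof -
  have s: "(\<lambda>k. c * x k) \<in> X" "rho w p (\<lambda>k. c * x k) = \<bar>c\<bar> powr p * rho w p x"
    using scale_lorentz[OF x pp, of c] by auto
  have r: "rho w p x \<ge> 0" using rho_nonneg[OF wd w0 x] .
  have "ND (\<lambda>k. c * x k) = (\<bar>c\<bar> powr p) powr (1/p) * rho w p x powr (1/p)"
    unfolding lnd s(2) using r by (simp add: powr_mult)
  also have "\<dots> = \<bar>c\<bar> * ND x" using pp by (simp add: powr_powr lnd)
  finally show ?thesis using s(1) by simp
qed

lemma quasiND:
  assumes "x \<in> X" "y \<in> X" "\<And>k. \<bar>s k\<bar> \<le> \<bar>x k\<bar> + \<bar>y k\<bar>"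
  shows "s \<in> X \<and> ND s \<le> 4 * (ND x + ND y)"
proof -
  have q: "s \<in> X" "rho w p s \<le> 2 powr p * (rho w p x + rho w p y)"
    using quasi_lorentz[OF wd w0 w1 p1 assms] by auto
  let ?m = "max (ND x) (ND y)"
  have m0: "?m \<ge> 0" using ND_nonneg by (simp add: le_max_iff_disj)
  have "rho w p x + rho w p y \<le> 2 * ?m powr p"
  proof -
    have "ND x powr p \<le> ?m powr p" "ND y powr p \<le> ?m powr p"
      using ND_nonneg pp by (auto intro!: powr_mono2)
    then show ?thesis using assms(1,2) by (simp add: rho_ND)
  qed
  also have "\<dots> \<le> 2 powr p * ?m powr p"
    using powr_mono[of 1 p 2] p1 by (intro mult_right_mono) auto
  finally have "rho w p s \<le> 2 powr p * (2 powr p * ?m powr p)"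
    using q(2) mult_left_mono[of _ _ "2 powr p"] by (smt (verit) powr_ge_zero)
  also have "\<dots> = (4 * ?m) powr p" using m0 by (simp add: powr_mult[symmetric])
  finally have "ND s \<le> ((4 * ?m) powr p) powr (1/p)"
    unfolding lnd by (intro rt rho_nonneg[OF wd w0 q(1)])
  also have "\<dots> = 4 * ?m" using m0 pp by (simp add: powr_powr)
  also have "\<dots> \<le> 4 * (ND x + ND y)" using ND_nonneg by (simp add: max_def)
  finally show ?thesis using q(1) by simp
qed

lemma tailND:
  assumes x: "x \<in> X"
  shows "(\<lambda>N. ND (tl_of N x)) \<longlonglongrightarrow> 0"
proof -
  have m: "(\<lambda>k. if N \<le> k then x k else 0) \<in> X" for N
    using monoND[OF x, of "\<lambda>k. if N \<le> k then x k else 0"] by auto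
  have ev: "\<forall>\<^sub>F N in sequentially. 0 \<le> rho w p (\<lambda>k. if N \<le> k then x k else 0)"
    by (rule always_eventually) (use rho_nonneg[OF wd w0 m] in blast)
  show ?thesis unfolding lnd tl_of_def
    by (rule tendsto_zero_powrI[OF tail_lorentz[OF wd w0 w1 p1 x] tendsto_const ev]) (simp add: pp)
qed

lemma headND:
  assumes "\<And>k. k \<ge> N \<Longrightarrow> s k = 0"
  shows "s \<in> X \<and> s \<in> Y \<and> ND s \<le> NL s"
proof -
  have h: "s \<in> X" "rho w p s \<le> (\<Sum>k<N. \<bar>s k\<bar> powr p)" using head_lorentz[OF wd w0 w1 p1 assms] by auto
  have g: "s \<in> Y" "sig p s = (\<Sum>k<N. \<bar>s k\<bar> powr p)" using head_ell[OF p1 assms] by auto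
  have "ND s \<le> sig p s powr (1/p)" unfolding lnd using h g by (intro rt rho_nonneg[OF wd w0]) auto
  then show ?thesis using h g by (simp add: ell_norm_sig[OF p1])
qed

lemma T0: "T (\<lambda>k. 0) = (\<lambda>k. 0)"
  using Tsc[OF zero_in_lorentz[OF pp], of 0] by simp

lemma Tminus:
  assumes "x \<in> X" "y \<in> X"
  shows "T (\<lambda>k. x k - y k) = (\<lambda>k. T x k - T y k)"
proof -
  have m: "(\<lambda>k. - y k) \<in> X" using scaleND[OF assms(2), of "-1"] by simp
  have e: "(\<lambda>k. x k - y k) = (\<lambda>k. x k + (\<lambda>k. - y k) k)" by simp
  have t: "T (\<lambda>k. - y k) = (\<lambda>k. - T y k)" using Tsc[OF assms(2), of "-1"] by simp
  show ?thesis unfolding e Tadd[OF assms(1) m] t by simp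
qed

lemma minusX: "x \<in> X \<Longrightarrow> y \<in> X \<Longrightarrow> (\<lambda>k. x k - y k) \<in> X \<and> ND (\<lambda>k. x k - y k) \<le> 4 * (ND x + ND y)"
  by (rule quasiND) auto

lemma NLminus: "y \<in> Y \<Longrightarrow> z \<in> Y \<Longrightarrow> (\<lambda>k. y k - z k) \<in> Y \<and> NL (\<lambda>k. y k - z k) \<le> NL y + NL z"
  by (rule minkowski[OF p1]) auto

lemma NLadd: "y \<in> Y \<Longrightarrow> z \<in> Y \<Longrightarrow> (\<lambda>k. y k + z k) \<in> Y \<and> NL (\<lambda>k. y k + z k) \<le> NL y + NL z"
  by (rule minkowski[OF p1]) auto

end


lemma bdd_seq_conv:
  fixes f :: "nat \<Rightarrow> nat \<Rightarrow> real"
  assumes "\<And>j k. \<bar>f j k\<bar> \<le> B k"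
  shows "\<exists>r g. strict_mono r \<and> (\<forall>k. (\<lambda>j. f (r j) k) \<longlonglongrightarrow> g k)"
proof -
  define S where "S = PiE UNIV (\<lambda>k. {-B k..B k})"
  have "compactin (product_topology (\<lambda>i. euclidean) UNIV) S"
    unfolding S_def by (simp add: compactin_PiE)
  then have "compact S" by (simp add: euclidean_product_topology)
  then have "seq_compact S" by (rule compact_imp_seq_compact)
  moreover have "\<forall>j. f j \<in> S"
  proof
    fix j
    have "f j k \<in> {-B k..B k}" for k using assms[of j k] by (auto simp: abs_le_iff)
    then show "f j \<in> S" by (simp add: S_def PiE_iff)
  qed
  ultimately obtain l r where "l \<in> S" "strict_mono r" "(f \<circ> r) \<longlonglongrightarrow> l"
    unfolding seq_compact_def by metis
  have "(\<lambda>j. (f \<circ> r) j k) \<longlonglongrightarrow> l k" for k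
    by (rule continuous_on_tendsto_compose[OF continuous_on_product_coordinates \<open>(f \<circ> r) \<longlonglongrightarrow> l\<close>]) auto
  then show ?thesis using \<open>strict_mono r\<close>
    by (intro exI[of _ r] exI[of _ l]) (auto simp: o_def)
qed

lemma abs_tri2: "\<bar>a\<bar> \<le> \<bar>a - b\<bar> + \<bar>b::real\<bar>"
  by (metis abs_triangle_ineq diff_add_cancel)

lemma seq_comp_ge:
  fixes f :: "nat \<Rightarrow> real"
  assumes "f \<longlonglongrightarrow> l" "\<And>m. g m \<ge> m"
  shows "(\<lambda>m. f (g m)) \<longlonglongrightarrow> l"
proof -
  have "filterlim g sequentially sequentially"
    using assms(2) by (intro filterlim_at_top_mono[OF filterlim_ident]) (auto intro: always_eventually)
  then show ?thesis using filterlim_compose[OF assms(1)] by blast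
qed

context setting
begin

lemma head_null:
  assumes "\<And>k. (\<lambda>j. h j k) \<longlonglongrightarrow> 0"
  shows "(\<lambda>j. NL (hd_of N (h j))) \<longlonglongrightarrow> 0"
proof -
  have hz: "\<And>k. k \<ge> N \<Longrightarrow> hd_of N (h j) k = 0" for j by (simp add: hd_of_def)
  have e: "sig p (hd_of N (h j)) = (\<Sum>k<N. \<bar>h j k\<bar> powr p)" for j
    using head_ell[OF p1 hz[of _ j]] by (simp add: hd_of_def)
  have "(\<lambda>j. \<Sum>k<N. \<bar>h j k\<bar> powr p) \<longlonglongrightarrow> (\<Sum>k<N. 0)"
    by (intro tendsto_sum tendsto_zero_powrI[OF tendsto_rabs_zero[OF assms] tendsto_const]) (auto simp: pp)
  then have "(\<lambda>j. sig p (hd_of N (h j))) \<longlonglongrightarrow> 0" unfolding e by simp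
  then show ?thesis unfolding ell_norm_sig[OF p1]
    by (rule tendsto_zero_powrI[OF _ tendsto_const]) (auto simp: pp intro!: always_eventually sig_nonneg[OF p1] head_ell[OF p1 hz, THEN conjunct1])
qed

lemma split_NL:
  assumes "y \<in> Y"
  shows "NL y \<le> NL (hd_of N y) + NL (tl_of N y)"
proof -
  have h1: "hd_of N y \<in> Y" using mono_ell[OF p1 assms, of "hd_of N y"] by (simp add: hd_of_def)
  have h2: "tl_of N y \<in> Y" using mono_ell[OF p1 assms, of "tl_of N y"] by (simp add: tl_of_def)
  have "\<And>k. \<bar>y k\<bar> \<le> \<bar>hd_of N y k\<bar> + \<bar>tl_of N y k\<bar>" by (simp add: hd_of_def tl_of_def)
  then show ?thesis using minkowski[OF p1 h1 h2] by blast
qed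

lemma noncompact_seq:
  assumes "\<not> compact_op X ND Y NL T"
  shows "\<exists>z \<delta> Z. \<delta> > 0 \<and> Z > 0 \<and> (\<forall>m. z m \<in> X \<and> ND (z m) \<le> Z \<and> NL (T (z m)) \<ge> \<delta>)
     \<and> (\<forall>k. (\<lambda>m. z m k) \<longlonglongrightarrow> 0) \<and> (\<forall>k. (\<lambda>m. T (z m) k) \<longlonglongrightarrow> 0)"
proof -
  obtain u bd where A: "\<forall>j. u j \<in> X \<and> ND (u j) \<le> bd"
    and B: "\<not> (\<exists>(r::nat\<Rightarrow>nat) y. strict_mono r \<and> y \<in> Y \<and> (\<lambda>j. NL (seq_diff (T (u (r j))) y)) \<longlonglongrightarrow> 0)"
    using assms unfolding compact_op_def by auto
  have u: "\<And>j. u j \<in> X" "\<And>j. ND (u j) \<le> bd" using A by auto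
  have nc: "\<And>r y. strict_mono r \<Longrightarrow> y \<in> Y \<Longrightarrow> \<not> (\<lambda>j. NL (seq_diff (T (u (r j))) y)) \<longlonglongrightarrow> 0"
    using B by blast
  have bd0: "bd \<ge> 0" using u(2)[of 0] ND_nonneg[of "u 0"] by linarith
  have Tu: "\<bar>T (u j) i\<bar> \<le> C * bd" for j i
  proof -
    have "\<bar>T (u j) i\<bar> \<le> NL (T (u j))" by (rule coord_le_ell[OF p1 TY[OF u(1)]])
    also have "\<dots> \<le> C * ND (u j)" by (rule TC[OF u(1)])
    also have "\<dots> \<le> C * bd" using C1 u(2) by (intro mult_left_mono) auto
    finally show ?thesis .
  qed
  have uu: "\<bar>u j i\<bar> \<le> C * bd" for j i
  proof -
    have "\<bar>u j i\<bar> \<le> bd" using coordND[OF u(1)] u(2) order_trans by blast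
    also have "\<dots> \<le> C * bd" using C1 bd0 by (simp add: mult_le_cancel_right1)
    finally show ?thesis .
  qed
  define F where "F j k = (if even k then u j (k div 2) else T (u j) (k div 2))" for j k
  have "\<bar>F j k\<bar> \<le> C * bd" for j k using Tu uu by (simp add: F_def)
  then obtain r g where r: "strict_mono r" and g: "\<And>k. (\<lambda>j. F (r j) k) \<longlonglongrightarrow> g k"
    using bdd_seq_conv[of F "\<lambda>_. C * bd"] by blast
  define v where "v j = u (r j)" for j
  define a where "a i = g (2 * i)" for i
  define y where "y i = g (Suc (2 * i))" for i
  have va: "(\<lambda>j. v j i) \<longlonglongrightarrow> a i" for i using g[of "2 * i"] by (simp add: F_def v_def a_def)
  have Tvy: "(\<lambda>j. T (v j) i) \<longlonglongrightarrow> y i" for i using g[of "Suc (2 * i)"] by (simp add: F_def v_def y_def)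
  have vX: "v j \<in> X" "ND (v j) \<le> bd" for j using u by (auto simp: v_def)
  have yY: "y \<in> Y"
  proof -
    have part: "(\<Sum>i<K. \<bar>y i\<bar> powr p) \<le> (C * bd) powr p" for K
    proof -
      have lim: "(\<lambda>j. \<Sum>i<K. \<bar>T (v j) i\<bar> powr p) \<longlonglongrightarrow> (\<Sum>i<K. \<bar>y i\<bar> powr p)"
        by (intro tendsto_sum tendsto_powr' tendsto_rabs Tvy tendsto_const) (auto simp: pp)
      have b: "(\<Sum>i<K. \<bar>T (v j) i\<bar> powr p) \<le> (C * bd) powr p" for j
      proof -
        have s: "summable (\<lambda>i. \<bar>T (v j) i\<bar> powr p)" using TY[OF vX(1)] by (simp add: in_ell_iff[OF p1])
        have "(\<Sum>i<K. \<bar>T (v j) i\<bar> powr p) \<le> sig p (T (v j))"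
          unfolding sig_def by (rule sum_le_suminf[OF s]) auto
        also have "\<dots> = NL (T (v j)) powr p" by (rule sig_ell_norm[OF p1 TY[OF vX(1)]])
        also have "\<dots> \<le> (C * bd) powr p"
        proof (rule powr_mono2)
          show "NL (T (v j)) \<le> C * bd"
            using TC[OF vX(1)] vX(2)[of j] C1 by (smt (verit) mult_left_mono)
        qed (use pp ell_norm_nonneg[OF p1] in auto)
        finally show ?thesis .
      qed
      show ?thesis using LIMSEQ_le_const2[OF lim] b by blast
    qed
    show ?thesis unfolding in_ell_iff[OF p1]
      by (rule summableI_nonneg_bounded[OF _ part]) auto
  qed
  define h where "h j = (\<lambda>k. T (v j) k - y k)" for j
  have hY: "h j \<in> Y" for j unfolding h_def using NLminus[OF TY[OF vX(1)] yY] by blast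
  have h0: "(\<lambda>j. h j k) \<longlonglongrightarrow> 0" for k
    using tendsto_diff[OF Tvy[of k] tendsto_const[of "y k"]] by (simp add: h_def)
  have nh: "\<not> (\<lambda>j. NL (h j)) \<longlonglongrightarrow> 0"
    using nc[OF r yY] by (simp add: h_def v_def seq_diff_def)
  obtain \<epsilon> where \<epsilon>: "\<epsilon> > 0" "\<And>N. \<exists>j\<ge>N. NL (h j) \<ge> \<epsilon>"
  proof -
    have "\<exists>\<epsilon>>0. \<forall>N. \<exists>j\<ge>N. NL (h j) \<ge> \<epsilon>"
    proof (rule ccontr)
      assume nt: "\<not> ?thesis"
      then have "\<forall>\<epsilon>>0. \<exists>N. \<forall>j\<ge>N. NL (h j) < \<epsilon>"
      proof (intro allI impI)
        fix e :: real assume "e > 0"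
        with nt have "\<not> (\<forall>N. \<exists>j\<ge>N. NL (h j) \<ge> e)" by blast
        then obtain N where "\<forall>j\<ge>N. \<not> NL (h j) \<ge> e" by blast
        then show "\<exists>N. \<forall>j\<ge>N. NL (h j) < e" by (auto simp: not_le)
      qed
      then have "(\<lambda>j. NL (h j)) \<longlonglongrightarrow> 0"
      proof (intro LIMSEQ_I)
        fix r :: real assume "0 < r"
        then obtain N where "\<forall>j\<ge>N. NL (h j) < r" using \<open>\<forall>\<epsilon>>0. \<exists>N. \<forall>j\<ge>N. NL (h j) < \<epsilon>\<close> by blast
        then show "\<exists>no. \<forall>n\<ge>no. norm (NL (h n) - 0) < r" using ell_norm_nonneg[OF p1] by auto
      qed
      then show False using nh by simp
    qed
    then show ?thesis using that by blast
  qed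
  have pick: "\<exists>b\<ge>m. NL (\<lambda>k. h b k - h m k) \<ge> \<epsilon> / 2" for m
  proof -
    have "\<exists>N'. NL (tl_of N' (h m)) < \<epsilon> / 4"
      using LIMSEQ_D[OF tail_ell[OF p1 hY[of m]], of "\<epsilon> / 4"] \<epsilon>(1)
      by (auto simp: tl_of_def ell_norm_nonneg[OF p1])
    then obtain N' where N': "NL (tl_of N' (h m)) < \<epsilon> / 4" by blast
    obtain B0 where B0: "\<And>j. j \<ge> B0 \<Longrightarrow> NL (hd_of N' (h j)) < \<epsilon> / 4"
      using LIMSEQ_D[OF head_null[of h, OF h0, of N'], of "\<epsilon> / 4"] \<epsilon>(1)
      by (auto simp: ell_norm_nonneg[OF p1])
    obtain b where b: "b \<ge> max B0 m" "NL (h b) \<ge> \<epsilon>" using \<epsilon>(2) by blast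
    define d where "d = (\<lambda>k. h b k - h m k)"
    have dY: "d \<in> Y" unfolding d_def using NLminus[OF hY hY] by blast
    have "\<epsilon> \<le> NL (hd_of N' (h b)) + NL (tl_of N' (h b))"
      using b(2) split_NL[OF hY[of b], of N'] by linarith
    moreover have "NL (tl_of N' (h b)) \<le> NL (tl_of N' d) + NL (tl_of N' (h m))"
    proof -
      have "tl_of N' d \<in> Y" "tl_of N' (h m) \<in> Y"
        using mono_ell[OF p1 dY] mono_ell[OF p1 hY[of m]] by (auto simp: tl_of_def)
      moreover have "\<And>k. \<bar>tl_of N' (h b) k\<bar> \<le> \<bar>tl_of N' d k\<bar> + \<bar>tl_of N' (h m) k\<bar>"
        by (simp add: tl_of_def d_def abs_tri2)
      ultimately show ?thesis using minkowski[OF p1, of "tl_of N' d" "tl_of N' (h m)" "tl_of N' (h b)"]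
        by blast
    qed
    moreover have "NL (tl_of N' d) \<le> NL d"
      using mono_ell[OF p1 dY] by (auto simp: tl_of_def)
    ultimately have "\<epsilon> \<le> NL d + \<epsilon> / 2" using B0[of b] b(1) N' by linarith
    then show ?thesis using b(1) by (intro exI[of _ b]) (auto simp: d_def)
  qed
  then obtain bf where bf: "\<And>m. bf m \<ge> m" "\<And>m. NL (\<lambda>k. h (bf m) k - h m k) \<ge> \<epsilon> / 2"
    by metis
  define z where "z m = (\<lambda>k. v (bf m) k - v m k)" for m
  have zX: "z m \<in> X" "ND (z m) \<le> 8 * bd" for m
  proof -
    have "z m \<in> X \<and> ND (z m) \<le> 4 * (ND (v (bf m)) + ND (v m))"
      unfolding z_def by (rule minusX[OF vX(1) vX(1)])
    then show "z m \<in> X" "ND (z m) \<le> 8 * bd" using vX(2)[of m] vX(2)[of "bf m"] by auto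
  qed
  have Tz: "T (z m) = (\<lambda>k. h (bf m) k - h m k)" for m
    unfolding z_def Tminus[OF vX(1) vX(1)] h_def by simp
  have A1: "\<forall>m. z m \<in> X \<and> ND (z m) \<le> 8 * bd + 1 \<and> NL (T (z m)) \<ge> \<epsilon> / 2"
  proof
    fix m
    have "ND (z m) \<le> 8 * bd + 1" using zX(2)[of m] by linarith
    then show "z m \<in> X \<and> ND (z m) \<le> 8 * bd + 1 \<and> NL (T (z m)) \<ge> \<epsilon> / 2"
      using zX(1)[of m] bf(2)[of m] Tz[of m] by auto
  qed
  have A2: "\<forall>k. (\<lambda>m. z m k) \<longlonglongrightarrow> 0"
  proof
    fix k
    show "(\<lambda>m. z m k) \<longlonglongrightarrow> 0"
      using tendsto_diff[OF seq_comp_ge[OF va[of k] bf(1)] va[of k]] by (simp add: z_def)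
  qed
  have A3: "\<forall>k. (\<lambda>m. T (z m) k) \<longlonglongrightarrow> 0"
  proof
    fix k
    show "(\<lambda>m. T (z m) k) \<longlonglongrightarrow> 0"
      using tendsto_diff[OF seq_comp_ge[OF h0[of k] bf(1)] h0[of k]] by (simp add: Tz)
  qed
  have "\<epsilon> / 2 > 0" "8 * bd + 1 > 0" using \<epsilon>(1) bd0 by auto
  then show ?thesis using A1 A2 A3 by blast
qed

end


interpretation FV: vector_space "\<lambda>(c::real) (f::nat\<Rightarrow>real). (\<lambda>k. c * f k)"
  by unfold_locales (auto simp: fun_eq_iff algebra_simps plus_fun_def)

lemma sum_fun_apply: "(\<Sum>v\<in>S. (g v :: nat \<Rightarrow> real)) k = (\<Sum>v\<in>S. g v k)"
  by (induction S rule: infinite_finite_induct) (auto simp: zero_fun_def)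

lemma fspan_sub: "fspan F \<subseteq> FV.span F"
proof
  fix v assume "v \<in> fspan F"
  then obtain c where c: "v = (\<lambda>k. \<Sum>f\<in>F. c f * f k)" by (auto simp: fspan_def)
  have "v = (\<Sum>f\<in>F. (\<lambda>k. c f * f k))" unfolding c by (rule ext) (simp add: sum_fun_apply)
  also have "\<dots> \<in> FV.span F"
    by (intro FV.span_sum FV.span_scale[of _ F "c _", unfolded] FV.span_base) 
  finally show "v \<in> FV.span F" .
qed

lemma fin_dim_contra:
  fixes bb :: "nat \<Rightarrow> nat \<Rightarrow> real" and kk :: "nat \<Rightarrow> nat"
  assumes nz: "\<And>i. i \<le> n \<Longrightarrow> bb i (kk i) \<noteq> 0"
    and dis: "\<And>i j. i \<le> n \<Longrightarrow> j \<le> n \<Longrightarrow> i \<noteq> j \<Longrightarrow> bb j (kk i) = 0"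
    and F: "finite F" "card F \<le> n" and sp: "\<And>i. i \<le> n \<Longrightarrow> bb i \<in> fspan F"
  shows False
proof -
  define S where "S = bb ` {..n}"
  have inj: "inj_on bb {..n}"
  proof (rule inj_onI, rule ccontr)
    fix i j assume ij: "i \<in> {..n}" "j \<in> {..n}" "bb i = bb j" "i \<noteq> j"
    then have "bb j (kk i) = 0" using dis by auto
    then show False using nz[of i] ij by auto
  qed
  have cS: "card S = Suc n" unfolding S_def using card_image[OF inj] by simp
  have fS: "finite S" by (simp add: S_def)
  have ind: "\<not> FV.dependent S"
  proof
    assume "FV.dependent S"
    then obtain u v where uv: "v \<in> S" "u v \<noteq> 0" "(\<Sum>v\<in>S. (\<lambda>k. u v * v k)) = 0"
      using FV.dependent_finite[OF fS] by blast
    obtain i where i: "i \<le> n" "v = bb i" using uv(1) by (auto simp: S_def)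
    have "0 = (\<Sum>v\<in>S. (\<lambda>k. u v * v k)) (kk i)" using uv(3) by (simp add: zero_fun_def)
    also have "\<dots> = (\<Sum>v\<in>S. u v * v (kk i))" by (simp add: sum_fun_apply)
    also have "\<dots> = (\<Sum>j\<in>{..n}. u (bb j) * bb j (kk i))"
      unfolding S_def using sum.reindex[OF inj, of "\<lambda>v. u v * v (kk i)"] by simp
    also have "\<dots> = u (bb i) * bb i (kk i)"
    proof -
      have "(\<Sum>j\<in>{..n}-{i}. u (bb j) * bb j (kk i)) = 0"
        using i(1) dis[of i] by (intro sum.neutral) auto
      then show ?thesis using sum.remove[of "{..n}" i "\<lambda>j. u (bb j) * bb j (kk i)"] i(1) by simp
    qed
    finally show False using uv(2) i nz[of i] by simp
  qed
  have "S \<subseteq> FV.span F" using sp fspan_sub by (auto simp: S_def)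
  then have "card S \<le> card F" using FV.independent_span_bound[OF F(1) ind] by simp
  then show False using cS F(2) by simp
qed


locale hump = setting +
  fixes z :: "nat \<Rightarrow> nat \<Rightarrow> real" and \<delta> Z :: real
  assumes zX: "\<And>m. z m \<in> lorentz_space w p" and zZ: "\<And>m. lorentz_norm w p (z m) \<le> Z"
    and zT: "\<And>m. ell_norm p (T (z m)) \<ge> \<delta>"
    and dpos: "\<delta> > 0" and Zpos: "Z > 0"
    and zc: "\<And>k. (\<lambda>m. z m k) \<longlonglongrightarrow> 0" and Tzc: "\<And>k. (\<lambda>m. T (z m) k) \<longlonglongrightarrow> 0"
begin

definition "\<theta> = \<delta> / (4 * (2 + 8 * C))"
definition "\<eta> i = \<theta> / 2 ^ Suc i"

lemma theta_pos: "\<theta> > 0" using dpos C1 by (simp add: \<theta>_def)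
lemma eta_pos: "\<eta> i > 0" using theta_pos by (simp add: \<eta>_def)
lemma eta_le: "\<eta> i \<le> \<theta>"
proof -
  have p: "(1::real) \<le> 2 ^ Suc i" by (rule one_le_power) simp
  have "\<theta> / 2 ^ Suc i \<le> \<theta> / 1" by (rule divide_left_mono) (use theta_pos p in auto)
  then show ?thesis by (simp add: \<eta>_def)
qed
lemma theta_small: "(2 + 8 * C) * \<theta> = \<delta> / 4"
proof -
  have "2 + 8 * C > 0" using C1 by simp
  then show ?thesis by (simp add: \<theta>_def field_simps)
qed
lemma theta_small2: "2 * \<theta> \<le> \<delta> / 2"
proof -
  have "2 * \<theta> \<le> (2 + 8 * C) * \<theta>" using C1 theta_pos by (intro mult_right_mono) auto
  then show ?thesis using theta_small dpos by simp
qed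

lemma eta_sum: "(\<Sum>i<J. \<eta> i) = \<theta> * (1 - 1 / 2 ^ J)"
  by (induction J) (simp_all add: \<eta>_def field_simps)

lemma eta_sum_le: "(\<Sum>i<J. \<eta> i) \<le> \<theta>"
  using eta_sum[of J] theta_pos by (simp add: mult_left_le)

lemma step_ex:
  "\<exists>q. snd q > N \<and> ND (hd_of N (z (fst q))) \<le> \<eta> i \<and> NL (hd_of N (T (z (fst q)))) \<le> \<eta> i
     \<and> ND (tl_of (snd q) (z (fst q))) \<le> \<eta> i \<and> NL (tl_of (snd q) (T (z (fst q)))) \<le> \<eta> i"
proof -
  have e: "\<eta> i > 0" by (rule eta_pos)
  obtain m1 where m1: "\<And>m. m \<ge> m1 \<Longrightarrow> NL (hd_of N (z m)) < \<eta> i"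
    using LIMSEQ_D[OF head_null[of z, OF zc, of N] e] by (auto simp: ell_norm_nonneg[OF p1])
  obtain m2 where m2: "\<And>m. m \<ge> m2 \<Longrightarrow> NL (hd_of N (T (z m))) < \<eta> i"
    using LIMSEQ_D[OF head_null[of "\<lambda>m. T (z m)", OF Tzc, of N] e] by (auto simp: ell_norm_nonneg[OF p1])
  define m where "m = max m1 m2"
  have h1: "ND (hd_of N (z m)) \<le> \<eta> i"
  proof -
    have "ND (hd_of N (z m)) \<le> NL (hd_of N (z m))"
      using headND[of N "hd_of N (z m)"] by (auto simp: hd_of_def)
    then show ?thesis using m1[of m] by (simp add: m_def)
  qed
  have h2: "NL (hd_of N (T (z m))) \<le> \<eta> i" using m2[of m] by (simp add: m_def)
  obtain n1 where n1: "\<And>n. n \<ge> n1 \<Longrightarrow> ND (tl_of n (z m)) < \<eta> i"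
    using LIMSEQ_D[OF tailND[OF zX[of m]] e] by (auto simp: ND_nonneg)
  obtain n2 where n2: "\<And>n. n \<ge> n2 \<Longrightarrow> NL (tl_of n (T (z m))) < \<eta> i"
    using LIMSEQ_D[OF tail_ell[OF p1 TY[OF zX[of m]]] e] by (auto simp: ell_norm_nonneg[OF p1] tl_of_def)
  define n where "n = max (max n1 n2) (Suc N)"
  have "n1 \<le> n" "n2 \<le> n" by (simp_all add: n_def)
  then have t1: "ND (tl_of n (z m)) \<le> \<eta> i" and t2: "NL (tl_of n (T (z m))) \<le> \<eta> i"
    using n1 n2 less_imp_le by blast+
  show ?thesis
    using h1 h2 t1 t2 by (intro exI[of _ "(m, n)"]) (auto simp: n_def)
qed

definition "F i N = (SOME q. snd q > N \<and> ND (hd_of N (z (fst q))) \<le> \<eta> i \<and> NL (hd_of N (T (z (fst q)))) \<le> \<eta> i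
     \<and> ND (tl_of (snd q) (z (fst q))) \<le> \<eta> i \<and> NL (tl_of (snd q) (T (z (fst q)))) \<le> \<eta> i)"

lemma F_spec: "snd (F i N) > N \<and> ND (hd_of N (z (fst (F i N)))) \<le> \<eta> i \<and> NL (hd_of N (T (z (fst (F i N))))) \<le> \<eta> i
     \<and> ND (tl_of (snd (F i N)) (z (fst (F i N)))) \<le> \<eta> i \<and> NL (tl_of (snd (F i N)) (T (z (fst (F i N))))) \<le> \<eta> i"
  unfolding F_def by (rule someI_ex[OF step_ex])

primrec Ns :: "nat \<Rightarrow> nat" where
  "Ns 0 = 0"
| "Ns (Suc i) = snd (F i (Ns i))"

definition "ms i = fst (F i (Ns i))"

definition "inI i k \<longleftrightarrow> Ns i \<le> k \<and> k < Ns (Suc i)"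

definition "b i = (\<lambda>k. if inI i k then z (ms i) k else 0)"
definition "g i = (\<lambda>k. if inI i k then T (z (ms i)) k else 0)"

lemma Ns_less: "Ns i < Ns (Suc i)" using F_spec[where i=i and N="Ns i"] by simp

lemma Ns_mono: "strict_mono Ns" using Ns_less by (simp add: strict_mono_Suc_iff)

lemma Ns_ge: "i \<le> Ns i" using seq_suble[OF Ns_mono] .

lemma Ns_le: "i \<le> j \<Longrightarrow> Ns i \<le> Ns j" using Ns_mono by (simp add: strict_mono_less_eq)

lemma blk: "\<exists>i. inI i k"
proof -
  have ex: "\<exists>i. k < Ns (Suc i)" using Ns_ge[of "Suc k"] by (intro exI[of _ k]) simp
  define i where "i = (LEAST i. k < Ns (Suc i))"
  have i1: "k < Ns (Suc i)" unfolding i_def by (rule LeastI_ex[OF ex])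
  have i2: "Ns i \<le> k"
  proof (cases i)
    case 0 then show ?thesis by simp
  next
    case (Suc j)
    have "\<not> k < Ns (Suc j)" using not_less_Least[of j "\<lambda>i. k < Ns (Suc i)"] Suc by (simp add: i_def)
    then show ?thesis using Suc by simp
  qed
  show ?thesis using i1 i2 by (auto simp: inI_def)
qed

lemma blk_unique: "inI i k \<Longrightarrow> inI j k \<Longrightarrow> i = j"
proof (rule ccontr)
  assume a: "inI i k" "inI j k" "i \<noteq> j"
  consider "i < j" | "j < i" using a(3) by linarith
  then show False
  proof cases
    case 1 then have "Suc i \<le> j" by simp
    then have "Ns (Suc i) \<le> Ns j" by (rule Ns_le)
    then show False using a by (simp add: inI_def)
  next
    case 2 then have "Suc j \<le> i" by simp
    then have "Ns (Suc j) \<le> Ns i" by (rule Ns_le)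
    then show False using a by (simp add: inI_def)
  qed
qed

lemma b_X: "b i \<in> X \<and> ND (b i) \<le> Z"
proof -
  have "b i \<in> X \<and> ND (b i) \<le> ND (z (ms i))" using monoND[OF zX[of "ms i"], of "b i"] by (simp add: b_def)
  then show ?thesis using zZ[of "ms i"] by auto
qed

lemma g_Y: "g i \<in> Y"
  using mono_ell[OF p1 TY[OF zX[of "ms i"]], of "g i"] by (auto simp: g_def)

lemma E_bound: "NL (\<lambda>k. T (b i) k - g i k) \<le> (2 + 8 * C) * \<eta> i"
  and g_big: "NL (g i) \<ge> \<delta> / 2"
proof -
  let ?zz = "z (ms i)"
  let ?N = "Ns i" and ?N' = "Ns (Suc i)"
  have S: "ND (hd_of ?N ?zz) \<le> \<eta> i" "NL (hd_of ?N (T ?zz)) \<le> \<eta> i"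
     "ND (tl_of ?N' ?zz) \<le> \<eta> i" "NL (tl_of ?N' (T ?zz)) \<le> \<eta> i"
    using F_spec[where i=i and N="?N"] by (auto simp: ms_def)
  have zzX: "?zz \<in> X" by (rule zX)
  have hX: "hd_of ?N ?zz \<in> X" using monoND[OF zzX, of "hd_of ?N ?zz"] by (auto simp: hd_of_def)
  have tX: "tl_of ?N' ?zz \<in> X" using monoND[OF zzX, of "tl_of ?N' ?zz"] by (auto simp: tl_of_def)
  define e where "e = (\<lambda>k. ?zz k - b i k)"
  have ep: "\<bar>e k\<bar> \<le> \<bar>hd_of ?N ?zz k\<bar> + \<bar>tl_of ?N' ?zz k\<bar>" for k
    by (auto simp: e_def b_def inI_def hd_of_def tl_of_def)
  have eX: "e \<in> X" and eN: "ND e \<le> 4 * (ND (hd_of ?N ?zz) + ND (tl_of ?N' ?zz))"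
    using quasiND[OF hX tX ep] by auto
  have "4 * (ND (hd_of ?N ?zz) + ND (tl_of ?N' ?zz)) \<le> 4 * (\<eta> i + \<eta> i)"
    using S by (intro mult_left_mono add_mono) auto
  then have "ND e \<le> 4 * (\<eta> i + \<eta> i)" by (rule order_trans[OF eN])
  then have eN': "ND e \<le> 8 * \<eta> i" by simp
  have bz: "b i = (\<lambda>k. ?zz k - e k)" by (auto simp: e_def)
  have Tb: "T (b i) = (\<lambda>k. T ?zz k - T e k)" unfolding bz by (rule Tminus[OF zzX eX])
  have TzzY: "T ?zz \<in> Y" by (rule TY[OF zzX])
  have hY: "hd_of ?N (T ?zz) \<in> Y" using mono_ell[OF p1 TzzY, of "hd_of ?N (T ?zz)"] by (auto simp: hd_of_def)
  have tY: "tl_of ?N' (T ?zz) \<in> Y" using mono_ell[OF p1 TzzY, of "tl_of ?N' (T ?zz)"] by (auto simp: tl_of_def)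
  have dp: "\<bar>T ?zz k - g i k\<bar> \<le> \<bar>hd_of ?N (T ?zz) k\<bar> + \<bar>tl_of ?N' (T ?zz) k\<bar>" for k
    by (auto simp: g_def inI_def hd_of_def tl_of_def)
  have dY: "(\<lambda>k. T ?zz k - g i k) \<in> Y" and dN: "NL (\<lambda>k. T ?zz k - g i k) \<le> 2 * \<eta> i"
    using minkowski[OF p1 hY tY dp] S by auto
  have TeY: "T e \<in> Y" by (rule TY[OF eX])
  have TeN: "NL (T e) \<le> C * (8 * \<eta> i)"
    using TC[OF eX] eN' C1 by (smt (verit) mult_left_mono)
  have eq: "(\<lambda>k. T (b i) k - g i k) = (\<lambda>k. (T ?zz k - g i k) - T e k)" unfolding Tb by auto
  have "NL (\<lambda>k. T (b i) k - g i k) \<le> NL (\<lambda>k. T ?zz k - g i k) + NL (T e)"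
    unfolding eq using NLminus[OF dY TeY] by simp
  also have "\<dots> \<le> (2 + 8 * C) * \<eta> i" using dN TeN by (simp add: algebra_simps)
  finally show "NL (\<lambda>k. T (b i) k - g i k) \<le> (2 + 8 * C) * \<eta> i" .
  have "\<bar>T ?zz k\<bar> \<le> \<bar>g i k\<bar> + \<bar>T ?zz k - g i k\<bar>" for k using abs_tri2[of "T ?zz k" "g i k"] by linarith
  then have "NL (T ?zz) \<le> NL (g i) + NL (\<lambda>k. T ?zz k - g i k)"
    using minkowski[OF p1 g_Y dY] by blast
  then have "\<delta> \<le> NL (g i) + 2 * \<eta> i" using zT[of "ms i"] dN by linarith
  then show "NL (g i) \<ge> \<delta> / 2" using eta_le[of i] theta_small2 by linarith
qed

lemma Tb_big: "NL (T (b i)) \<ge> \<delta> / 4"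
proof -
  have EE: "(2 + 8 * C) * \<eta> i \<le> \<delta> / 4"
    using theta_small eta_le[of i] C1 by (smt (verit) mult_left_mono)
  have TbY: "T (b i) \<in> Y" using TY b_X by blast
  have dY: "(\<lambda>k. T (b i) k - g i k) \<in> Y" using NLminus[OF TbY g_Y] by blast
  have "\<bar>g i k\<bar> \<le> \<bar>T (b i) k\<bar> + \<bar>T (b i) k - g i k\<bar>" for k
    by (metis abs_minus_commute abs_tri2 add.commute)
  then have "NL (g i) \<le> NL (T (b i)) + NL (\<lambda>k. T (b i) k - g i k)"
    using minkowski[OF p1 TbY dY] by blast
  then show ?thesis using g_big[of i] E_bound[of i] EE by linarith
qed

lemma b_nz: "\<exists>k. inI i k \<and> b i k \<noteq> 0"
proof (rule ccontr)
  assume "\<not> ?thesis"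
  then have "b i = (\<lambda>k. 0)" by (auto simp: b_def fun_eq_iff)
  then have "NL (T (b i)) = 0" using T0 ell_norm_zero[OF p1] by simp
  then show False using Tb_big[of i] dpos by simp
qed

lemma b_out: "\<not> inI i k \<Longrightarrow> b i k = 0" by (simp add: b_def)
lemma g_out: "\<not> inI i k \<Longrightarrow> g i k = 0" by (simp add: g_def)

end


context hump
begin

definition "M = {x \<in> X. \<forall>i. \<exists>c. \<forall>k. inI i k \<longrightarrow> x k = c * b i k}"

lemma b_M: "b i \<in> M"
proof -
  have "\<forall>j. \<exists>c. \<forall>k. inI j k \<longrightarrow> b i k = c * b j k"
  proof
    fix j show "\<exists>c. \<forall>k. inI j k \<longrightarrow> b i k = c * b j k"
    proof (cases "i = j")
      case True then show ?thesis by (intro exI[of _ 1]) simp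
    next
      case False
      show ?thesis
      proof (intro exI[of _ 0] allI impI)
        fix k assume "inI j k"
        then have "\<not> inI i k" using blk_unique False by blast
        then show "b i k = 0 * b j k" by (simp add: b_out)
      qed
    qed
  qed
  then show ?thesis using b_X by (simp add: M_def)
qed

lemma lower:
  assumes xM: "x \<in> M"
  shows "\<delta> / 4 * ND x \<le> 4 * Z * NL (T x)"
proof -
  have xX: "x \<in> X" using xM by (simp add: M_def)
  have "\<forall>i. \<exists>c. \<forall>k. inI i k \<longrightarrow> x k = c * b i k" using xM by (simp add: M_def)
  then have "\<exists>a. \<forall>i. \<forall>k. inI i k \<longrightarrow> x k = a i * b i k" by (rule choice)
  then obtain a where a: "\<And>i k. inI i k \<Longrightarrow> x k = a i * b i k" by blast
  define xJ where "xJ J = hd_of (Ns J) x" for J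
  define GJ where "GJ J = (\<lambda>k. \<Sum>i<J. a i * g i k)" for J
  define P where "P J = (\<Sum>i<J. \<bar>a i\<bar> powr p)" for J
  define E where "E i = NL (\<lambda>k. T (b i) k - g i k)" for i
  have claim: "xJ J \<in> X \<and> rho w p (xJ J) \<le> Z powr p * P J \<and> GJ J \<in> Y \<and> sig p (GJ J) \<ge> (\<delta> / 2) powr p * P J
     \<and> NL (\<lambda>k. T (xJ J) k - GJ J k) \<le> (\<Sum>i<J. \<bar>a i\<bar> * E i) \<and> (\<forall>k. Ns J \<le> k \<longrightarrow> GJ J k = 0)" for J
  proof (induction J)
    case 0
    have x0: "xJ 0 = (\<lambda>k. 0)" by (simp add: xJ_def hd_of_def)
    have g0: "GJ 0 = (\<lambda>k. 0)" by (simp add: GJ_def)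
    have s0: "sig p (\<lambda>k. 0) = 0" by (simp add: sig_def)
    show ?case using zero_in_lorentz[OF pp] rho_zero[OF pp] zero_ell[OF p1] ell_norm_zero[OF p1] s0 T0
      by (simp add: x0 g0 P_def)
  next
    case (Suc J)
    have IH: "xJ J \<in> X" "rho w p (xJ J) \<le> Z powr p * P J" "GJ J \<in> Y" "sig p (GJ J) \<ge> (\<delta> / 2) powr p * P J"
      "NL (\<lambda>k. T (xJ J) k - GJ J k) \<le> (\<Sum>i<J. \<bar>a i\<bar> * E i)" "\<And>k. Ns J \<le> k \<Longrightarrow> GJ J k = 0"
      using Suc.IH by auto
    have bX: "b J \<in> X" using b_X by blast
    have NsJ: "Ns J < Ns (Suc J)" by (rule Ns_less)
    have xs: "xJ (Suc J) = (\<lambda>k. xJ J k + a J * b J k)"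
    proof
      fix k
      consider "k < Ns J" | "inI J k" | "Ns (Suc J) \<le> k" unfolding inI_def by (meson not_less)
      then show "xJ (Suc J) k = xJ J k + a J * b J k"
      proof cases
        case 1 then show ?thesis using NsJ by (simp add: xJ_def hd_of_def b_def inI_def)
      next
        case 2 then show ?thesis using a[OF 2] by (simp add: xJ_def hd_of_def inI_def)
      next
        case 3 then show ?thesis using NsJ by (simp add: xJ_def hd_of_def b_def inI_def)
      qed
    qed
    have abX: "(\<lambda>k. a J * b J k) \<in> X" and rab: "rho w p (\<lambda>k. a J * b J k) = \<bar>a J\<bar> powr p * rho w p (b J)"
      using scale_lorentz[OF bX pp, of "a J"] by auto
    have rb: "rho w p (b J) \<le> Z powr p"
      using b_X[of J] rho_ND[OF bX] ND_nonneg[of "b J"] pp by (auto intro: powr_mono2)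
    have dj: "xJ J k = 0 \<or> a J * b J k = 0" for k
      by (cases "k < Ns J") (auto simp: xJ_def hd_of_def b_def inI_def)
    have R: "xJ (Suc J) \<in> X" "rho w p (xJ (Suc J)) \<le> rho w p (xJ J) + rho w p (\<lambda>k. a J * b J k)"
      unfolding xs using disj_lorentz[OF wd w0 w1 p1 IH(1) abX dj] by auto
    have "rho w p (\<lambda>k. a J * b J k) \<le> \<bar>a J\<bar> powr p * Z powr p"
      unfolding rab by (intro mult_left_mono rb) auto
    then have R2: "rho w p (xJ (Suc J)) \<le> Z powr p * P (Suc J)"
      using R(2) IH(2) by (simp add: P_def algebra_simps)
    have gs: "GJ (Suc J) = (\<lambda>k. GJ J k + a J * g J k)" by (simp add: GJ_def)
    have agY: "(\<lambda>k. a J * g J k) \<in> Y" using scale_ell[OF p1 g_Y] by blast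
    have djg: "GJ J k = 0 \<or> a J * g J k = 0" for k
      using IH(6)[of k] by (cases "k < Ns J") (auto simp: g_def inI_def)
    have GY: "GJ (Suc J) \<in> Y" unfolding gs using NLadd[OF IH(3) agY] by blast
    have sg: "sig p (GJ (Suc J)) = sig p (GJ J) + \<bar>a J\<bar> powr p * sig p (g J)"
      unfolding gs disj_sig[OF p1 IH(3) agY djg] sig_scale[OF p1 g_Y] ..
    have sgJ: "sig p (g J) \<ge> (\<delta> / 2) powr p"
      unfolding sig_ell_norm[OF p1 g_Y] using g_big[of J] dpos pp by (intro powr_mono2) auto
    have S2: "sig p (GJ (Suc J)) \<ge> (\<delta> / 2) powr p * P (Suc J)"
    proof -
      have "\<bar>a J\<bar> powr p * (\<delta> / 2) powr p \<le> \<bar>a J\<bar> powr p * sig p (g J)"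
        by (intro mult_left_mono sgJ) auto
      then show ?thesis using IH(4) unfolding sg by (simp add: P_def algebra_simps)
    qed
    have G0: "\<forall>k. Ns (Suc J) \<le> k \<longrightarrow> GJ (Suc J) k = 0"
      using IH(6) NsJ by (auto simp: gs g_def inI_def)
    have TbY: "T (b J) \<in> Y" by (rule TY[OF bX])
    have Txs: "T (xJ (Suc J)) = (\<lambda>k. T (xJ J) k + a J * T (b J) k)"
      unfolding xs Tadd[OF IH(1) abX] Tsc[OF bX] ..
    have d1Y: "(\<lambda>k. T (xJ J) k - GJ J k) \<in> Y" using NLminus[OF TY[OF IH(1)] IH(3)] by blast
    have d2Y: "(\<lambda>k. T (b J) k - g J k) \<in> Y" using NLminus[OF TbY g_Y] by blast
    have d2s: "(\<lambda>k. a J * (T (b J) k - g J k)) \<in> Y" "NL (\<lambda>k. a J * (T (b J) k - g J k)) = \<bar>a J\<bar> * E J"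
      using scale_ell[OF p1 d2Y, of "a J"] by (auto simp: E_def)
    have eqd: "(\<lambda>k. T (xJ (Suc J)) k - GJ (Suc J) k) = (\<lambda>k. (T (xJ J) k - GJ J k) + a J * (T (b J) k - g J k))"
      unfolding Txs gs by (simp add: algebra_simps)
    have "NL (\<lambda>k. T (xJ (Suc J)) k - GJ (Suc J) k) \<le> NL (\<lambda>k. T (xJ J) k - GJ J k) + \<bar>a J\<bar> * E J"
      unfolding eqd using NLadd[OF d1Y d2s(1)] d2s(2) by simp
    then have D2: "NL (\<lambda>k. T (xJ (Suc J)) k - GJ (Suc J) k) \<le> (\<Sum>i<Suc J. \<bar>a i\<bar> * E i)"
      using IH(5) by simp
    show ?case using R(1) R2 GY S2 D2 G0 by blast
  qed
  have fin: "\<delta> / 4 * ND (xJ J) \<le> Z * NL (T (xJ J))" for J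
  proof -
    have C: "xJ J \<in> X" "rho w p (xJ J) \<le> Z powr p * P J" "GJ J \<in> Y" "sig p (GJ J) \<ge> (\<delta> / 2) powr p * P J"
      "NL (\<lambda>k. T (xJ J) k - GJ J k) \<le> (\<Sum>i<J. \<bar>a i\<bar> * E i)" using claim[of J] by auto
    define A where "A = P J powr (1/p)"
    have P0: "P J \<ge> 0" by (simp add: P_def sum_nonneg)
    have A0: "A \<ge> 0" by (simp add: A_def)
    have N1: "ND (xJ J) \<le> Z * A"
    proof -
      have "ND (xJ J) \<le> (Z powr p * P J) powr (1/p)"
        unfolding lnd by (intro rt rho_nonneg[OF wd w0 C(1)] C(2))
      also have "\<dots> = Z * A" using Zpos P0 pp by (simp add: powr_mult powr_powr A_def)
      finally show ?thesis .
    qed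
    have N2: "NL (GJ J) \<ge> \<delta> / 2 * A"
    proof -
      have "((\<delta> / 2) powr p * P J) powr (1/p) \<le> sig p (GJ J) powr (1/p)"
        using dpos P0 by (intro rt C(4)) auto
      moreover have "((\<delta> / 2) powr p * P J) powr (1/p) = \<delta> / 2 * A"
        using dpos P0 pp by (simp add: powr_mult powr_powr A_def)
      ultimately show ?thesis by (simp add: ell_norm_sig[OF p1])
    qed
    have ai: "\<bar>a i\<bar> \<le> A" if "i < J" for i
    proof -
      have "\<bar>a i\<bar> powr p \<le> P J" unfolding P_def using that by (intro member_le_sum) auto
      then have "(\<bar>a i\<bar> powr p) powr (1/p) \<le> A" unfolding A_def by (intro rt) auto
      then show ?thesis using pp by (simp add: powr_powr)
    qed
    have Ei: "E i \<le> (2 + 8 * C) * \<eta> i" for i unfolding E_def by (rule E_bound)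
    have "(\<Sum>i<J. \<bar>a i\<bar> * E i) \<le> (\<Sum>i<J. A * ((2 + 8 * C) * \<eta> i))"
      using ai Ei A0 by (intro sum_mono mult_mono) (auto simp: E_def ell_norm_nonneg[OF p1])
    also have "\<dots> = A * (2 + 8 * C) * (\<Sum>i<J. \<eta> i)" by (simp add: sum_distrib_left mult.assoc)
    also have "\<dots> \<le> A * (2 + 8 * C) * \<theta>" using A0 C1 eta_sum_le by (intro mult_left_mono) auto
    also have "\<dots> = A * (\<delta> / 4)" using theta_small by (metis mult.assoc)
    finally have D: "NL (\<lambda>k. T (xJ J) k - GJ J k) \<le> A * (\<delta> / 4)" using C(5) by linarith
    have TxY: "T (xJ J) \<in> Y" by (rule TY[OF C(1)])
    have dY: "(\<lambda>k. T (xJ J) k - GJ J k) \<in> Y" using NLminus[OF TxY C(3)] by blast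
    have "\<bar>GJ J k\<bar> \<le> \<bar>T (xJ J) k\<bar> + \<bar>T (xJ J) k - GJ J k\<bar>" for k
      by (metis abs_minus_commute abs_tri2 add.commute)
    then have "NL (GJ J) \<le> NL (T (xJ J)) + NL (\<lambda>k. T (xJ J) k - GJ J k)"
      using minkowski[OF p1 TxY dY] by blast
    then have "\<delta> / 4 * A \<le> NL (T (xJ J))" using N2 D by (simp add: algebra_simps)
    then have "Z * (\<delta> / 4 * A) \<le> Z * NL (T (xJ J))" using Zpos by (intro mult_left_mono) auto
    moreover have "\<delta> / 4 * ND (xJ J) \<le> \<delta> / 4 * (Z * A)" using N1 dpos by (intro mult_left_mono) auto
    ultimately show ?thesis by (simp add: algebra_simps)
  qed
  define t where "t J = tl_of (Ns J) x" for J
  have tX: "t J \<in> X" for J using monoND[OF xX, of "t J"] by (auto simp: t_def tl_of_def)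
  have xJX: "xJ J \<in> X" for J using monoND[OF xX, of "xJ J"] by (auto simp: xJ_def hd_of_def)
  have bnd: "\<delta> / 4 * ND x \<le> 4 * Z * NL (T x) + (4 * Z * C + \<delta>) * ND (t J)" for J
  proof -
    have sp: "x = (\<lambda>k. xJ J k + t J k)" by (auto simp: xJ_def t_def hd_of_def tl_of_def)
    have q: "ND x \<le> 4 * (ND (xJ J) + ND (t J))"
      using quasiND[OF xJX tX, of x] sp by (metis abs_triangle_ineq)
    have Tx: "T x = (\<lambda>k. T (xJ J) k + T (t J) k)" by (subst sp) (rule Tadd[OF xJX tX])
    have "T (xJ J) = (\<lambda>k. T x k - T (t J) k)" unfolding Tx by simp
    then have "NL (T (xJ J)) \<le> NL (T x) + NL (T (t J))"
      using NLminus[OF TY[OF xX] TY[OF tX]] by simp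
    also have "\<dots> \<le> NL (T x) + C * ND (t J)" using TC[OF tX] by simp
    finally have "Z * NL (T (xJ J)) \<le> Z * (NL (T x) + C * ND (t J))" using Zpos by (intro mult_left_mono) auto
    then have "\<delta> / 4 * ND (xJ J) \<le> Z * (NL (T x) + C * ND (t J))" using fin[of J] by linarith
    moreover have "\<delta> / 4 * ND x \<le> \<delta> / 4 * (4 * (ND (xJ J) + ND (t J)))" using q dpos by (intro mult_left_mono) auto
    ultimately show ?thesis by (simp add: algebra_simps)
  qed
  have lim: "(\<lambda>J. 4 * Z * NL (T x) + (4 * Z * C + \<delta>) * ND (t J)) \<longlonglongrightarrow> 4 * Z * NL (T x) + (4 * Z * C + \<delta>) * 0"
    unfolding t_def by (intro tendsto_intros seq_comp_ge[OF tailND[OF xX] Ns_ge])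
  then have lim': "(\<lambda>J. 4 * Z * NL (T x) + (4 * Z * C + \<delta>) * ND (t J)) \<longlonglongrightarrow> 4 * Z * NL (T x)" by simp
  show ?thesis by (rule LIMSEQ_le_const[OF lim']) (use bnd in blast)
qed

end


context hump
begin

lemma M_sub: "linear_subspace_of M X"
proof -
  have z: "(\<lambda>k. 0) \<in> M" using zero_in_lorentz[OF pp] by (auto simp: M_def intro: exI[of _ 0])
  have add: "(\<lambda>k. x k + y k) \<in> M" if x: "x \<in> M" and y: "y \<in> M" for x y
  proof -
    have xX: "x \<in> X" and yX: "y \<in> X" using x y by (auto simp: M_def)
    have "(\<lambda>k. x k + y k) \<in> X" using quasiND[OF xX yX, of "\<lambda>k. x k + y k"] by (simp add: abs_triangle_ineq)
    moreover have "\<exists>c. \<forall>k. inI i k \<longrightarrow> x k + y k = c * b i k" for i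
    proof -
      obtain cx where cx: "\<forall>k. inI i k \<longrightarrow> x k = cx * b i k" using x by (auto simp: M_def)
      obtain cy where cy: "\<forall>k. inI i k \<longrightarrow> y k = cy * b i k" using y by (auto simp: M_def)
      show ?thesis using cx cy by (intro exI[of _ "cx + cy"]) (auto simp: algebra_simps)
    qed
    ultimately show ?thesis by (simp add: M_def)
  qed
  have sc: "(\<lambda>k. c * x k) \<in> M" if x: "x \<in> M" for x c
  proof -
    have xX: "x \<in> X" using x by (auto simp: M_def)
    have "(\<lambda>k. c * x k) \<in> X" using scaleND[OF xX] by blast
    moreover have "\<exists>d. \<forall>k. inI i k \<longrightarrow> c * x k = d * b i k" for i
    proof -
      obtain cx where cx: "\<forall>k. inI i k \<longrightarrow> x k = cx * b i k" using x by (auto simp: M_def)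
      show ?thesis using cx by (intro exI[of _ "c * cx"]) auto
    qed
    ultimately show ?thesis by (simp add: M_def)
  qed
  show ?thesis unfolding linear_subspace_of_def using z add sc by (auto simp: M_def)
qed

lemma M_closed: "norm_closed_in M X ND"
  unfolding norm_closed_in_def
proof (intro allI impI)
  fix u :: "nat \<Rightarrow> nat \<Rightarrow> real" and x
  assume uM: "\<forall>j. u j \<in> M" and xX: "x \<in> X" and lim: "(\<lambda>j. ND (seq_diff (u j) x)) \<longlonglongrightarrow> 0"
  have uX: "u j \<in> X" for j using uM by (simp add: M_def)
  have coord: "(\<lambda>j. u j k) \<longlonglongrightarrow> x k" for k
  proof -
    have "(\<lambda>j. u j k - x k) \<longlonglongrightarrow> 0"
    proof (rule null_compare[OF lim])
      fix j
      have "seq_diff (u j) x \<in> X" unfolding seq_diff_def using minusX[OF uX xX] by blast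
      then show "\<bar>u j k - x k\<bar> \<le> ND (seq_diff (u j) x)" using coordND[of "seq_diff (u j) x" k]
        by (simp add: seq_diff_def)
    qed
    then show ?thesis using tendsto_add[OF _ tendsto_const[of "x k"]] by fastforce
  qed
  have "\<exists>c. \<forall>k. inI i k \<longrightarrow> x k = c * b i k" for i
  proof -
    obtain k0 where k0: "inI i k0" "b i k0 \<noteq> 0" using b_nz by blast
    have "\<forall>j. \<exists>c. \<forall>k. inI i k \<longrightarrow> u j k = c * b i k" using uM by (simp add: M_def)
    then have "\<exists>cu. \<forall>j. \<forall>k. inI i k \<longrightarrow> u j k = cu j * b i k" by (rule choice)
    then obtain cu where cu: "\<And>j k. inI i k \<Longrightarrow> u j k = cu j * b i k" by blast
    have cuj: "cu j = u j k0 / b i k0" for j using cu[OF k0(1), of j] k0(2) by simp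
    have cl: "(\<lambda>j. cu j) \<longlonglongrightarrow> x k0 / b i k0" unfolding cuj by (intro tendsto_divide coord tendsto_const k0(2))
    have "x k = x k0 / b i k0 * b i k" if "inI i k" for k
    proof -
      have "(\<lambda>j. u j k) \<longlonglongrightarrow> x k0 / b i k0 * b i k"
        unfolding cu[OF that] by (intro tendsto_mult cl tendsto_const)
      then show ?thesis using LIMSEQ_unique[OF coord[of k]] by blast
    qed
    then show ?thesis by blast
  qed
  then show "x \<in> M" using xX by (simp add: M_def)
qed

lemma M_inf: "infinite_dimensional M"
  unfolding infinite_dimensional_def
proof (intro allI impI notI)
  fix F assume F: "finite F" and sub: "M \<subseteq> fspan F"
  define kk where "kk i = (SOME k. inI i k \<and> b i k \<noteq> 0)" for i
  have kk: "inI i (kk i) \<and> b i (kk i) \<noteq> 0" for i unfolding kk_def by (rule someI_ex[OF b_nz])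
  show False
  proof (rule fin_dim_contra[of "card F" b kk F])
    show "\<And>i. i \<le> card F \<Longrightarrow> b i (kk i) \<noteq> 0" using kk by blast
    show "\<And>i j. i \<le> card F \<Longrightarrow> j \<le> card F \<Longrightarrow> i \<noteq> j \<Longrightarrow> b j (kk i) = 0"
      using kk blk_unique b_out by blast
    show "finite F" "card F \<le> card F" using F by auto
    show "\<And>i. i \<le> card F \<Longrightarrow> b i \<in> fspan F" using sub b_M by blast
  qed
qed

lemma not_ss: "\<not> strictly_singular X ND NL T"
proof -
  have "\<forall>x\<in>M. \<delta> / (16 * Z) * ND x \<le> NL (T x)"
  proof
    fix x assume "x \<in> M"
    then have "\<delta> / 4 * ND x \<le> 4 * Z * NL (T x)" by (rule lower)
    then show "\<delta> / (16 * Z) * ND x \<le> NL (T x)" using Zpos by (simp add: field_simps)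
  qed
  moreover have "\<delta> / (16 * Z) > 0" using dpos Zpos by simp
  ultimately show ?thesis unfolding strictly_singular_def using M_sub M_closed M_inf by blast
qed

end

theorem proposition6p9:
  fixes w :: "nat \<Rightarrow> real" and p :: real
    and T :: "(nat \<Rightarrow> real) \<Rightarrow> (nat \<Rightarrow> real)"
  assumes "1 \<le> p"
    and "w 0 = 1" and "decseq w" and "w \<longlonglongrightarrow> 0" and "\<not> summable w"
    and "bounded_linear_op (lorentz_space w p) (lorentz_norm w p) (ell_space p) (ell_norm p) T"
    and "strictly_singular (lorentz_space w p) (lorentz_norm w p) (ell_norm p) T"
  shows "compact_op (lorentz_space w p) (lorentz_norm w p) (ell_space p) (ell_norm p) T"
proof (rule ccontr)
  assume nc: "\<not> ?thesis"
  obtain C0 where C0: "\<forall>x\<in>lorentz_space w p. ell_norm p (T x) \<le> C0 * lorentz_norm w p x"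
    using assms(6) unfolding bounded_linear_op_def by blast
  define C where "C = max C0 1"
  have TC: "ell_norm p (T x) \<le> C * lorentz_norm w p x" if "x \<in> lorentz_space w p" for x
  proof -
    have "C0 * lorentz_norm w p x \<le> C * lorentz_norm w p x"
      using assms by (intro mult_right_mono) (auto simp: C_def lorentz_norm_def)
    then show ?thesis using C0 that by fastforce
  qed
  interpret S: setting w p T C
    using assms(1-4) assms(6) TC by unfold_locales (auto simp: bounded_linear_op_def C_def)
  obtain z \<delta> Z where zz: "\<delta> > 0" "Z > 0" "\<And>m. z m \<in> lorentz_space w p \<and> lorentz_norm w p (z m) \<le> Z \<and> ell_norm p (T (z m)) \<ge> \<delta>"
    "\<And>k. (\<lambda>m. z m k) \<longlonglongrightarrow> 0" "\<And>k. (\<lambda>m. T (z m) k) \<longlonglongrightarrow> 0"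
    using S.noncompact_seq[OF nc] by blast
  interpret H: hump w p T C z \<delta> Z
    using zz by unfold_locales auto
  show False using H.not_ss assms(7) by simp
qed


end
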